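(* Let $k$ be a field and let $A = H_{\bullet}(\overline{M}_{0,5})$ be the homology ring (isomorphic to the Chow ring) of the moduli space $\overline{M}_{0,5}$ of stable $5$-pointed curves of genus zero, graded so that the classes $D^S$ of boundary divisors have degree $1$. Then $A$ is a Koszul algebra.
   Context: By Keel's presentation, for $n\ge 4$ the ring $H_{\bullet}(\overline{M}_{0,n})$ is the commutative graded $k$-algebra generated in degree $1$ by variables $D^S$, indexed by subsets $S\subset\{1,\dots,n\}$ with $|S|\ge 2$ and $|S^C|\ge 2$, with $D^S=D^{S^C}$, subject to the relations: (1) for any four distinct $i,j,k,l\in\{1,\dots,n\}$, $\sum_{i,j\in S,\,k,l\notin S} D^S=\sum_{i,k\in S,\,j,l\notin S} D^S=\sum_{i,l\in S,\,j,k\notin S} D^S$; (2) $D^SD^T=0$ unless $S\subset T$, $T\subset S$, $S\subset T^C$, or $T^C\subset S$. A quadratic graded algebra is Koszul if its trivial module $k$ admits a linear graded free resolution. *)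

theory Defs
  imports Main "HOL-Library.Poly_Mapping"
begin

text \<open>Polynomials over a coefficient ring 'k in commuting variables X_S, S :: nat set.
  A monomial is a finitely supported exponent vector (nat set =>0 nat).\<close>

type_synonym 'k kpoly = "(nat set \<Rightarrow>\<^sub>0 nat) \<Rightarrow>\<^sub>0 'k"

definition var :: "nat set \<Rightarrow> 'k::comm_ring_1 kpoly" where
  "var S = Poly_Mapping.single (Poly_Mapping.single S 1) 1"

definition mdeg :: "(nat set \<Rightarrow>\<^sub>0 nat) \<Rightarrow> nat" where
  "mdeg m = (\<Sum>S\<in>Poly_Mapping.keys m. Poly_Mapping.lookup m S)"

definition linear_form :: "'k::comm_ring_1 kpoly \<Rightarrow> bool" where
  "linear_form p \<longleftrightarrow> (\<forall>m\<in>Poly_Mapping.keys p. mdeg m = 1)"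

inductive_set ideal_gen :: "'a::comm_ring_1 set \<Rightarrow> 'a set" for G where
  zero: "0 \<in> ideal_gen G"
| base: "g \<in> G \<Longrightarrow> g \<in> ideal_gen G"
| add: "x \<in> ideal_gen G \<Longrightarrow> y \<in> ideal_gen G \<Longrightarrow> x + y \<in> ideal_gen G"
| mult: "x \<in> ideal_gen G \<Longrightarrow> r * x \<in> ideal_gen G"

definition bdiv :: "nat \<Rightarrow> nat set \<Rightarrow> bool" where
  "bdiv n S \<longleftrightarrow> S \<subseteq> {1..n} \<and> 2 \<le> card S \<and> 2 \<le> card ({1..n} - S)"

definition cmpl :: "nat \<Rightarrow> nat set \<Rightarrow> nat set" where
  "cmpl n S = {1..n} - S"

definition keel_sum :: "nat \<Rightarrow> nat \<Rightarrow> nat \<Rightarrow> nat \<Rightarrow> nat \<Rightarrow> 'k::comm_ring_1 kpoly" where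
  "keel_sum n a b c d =
     (\<Sum>S\<in>{S. bdiv n S \<and> a \<in> S \<and> b \<in> S \<and> c \<notin> S \<and> d \<notin> S}. var S)"

text \<open>Generators of the defining ideal of the Keel ring in the polynomial ring on all X_S:
  variables not indexing boundary divisors are killed; D^S = D^{S^C};
  the linear relations (1); the quadratic relations (2).\<close>
definition keel_rels :: "nat \<Rightarrow> 'k::comm_ring_1 kpoly set" where
  "keel_rels n =
     {var S | S. \<not> bdiv n S}
   \<union> {var S - var (cmpl n S) | S. bdiv n S}
   \<union> {keel_sum n i j k l - keel_sum n i k j l | i j k l.
        {i,j,k,l} \<subseteq> {1..n} \<and> card {i,j,k,l} = 4}
   \<union> {keel_sum n i j k l - keel_sum n i l j k | i j k l.
        {i,j,k,l} \<subseteq> {1..n} \<and> card {i,j,k,l} = 4}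
   \<union> {var S * var T | S T. bdiv n S \<and> bdiv n T \<and>
        \<not> (S \<subseteq> T \<or> T \<subseteq> S \<or> S \<subseteq> cmpl n T \<or> cmpl n T \<subseteq> S)}"

definition keel_ideal :: "nat \<Rightarrow> 'k::comm_ring_1 kpoly set" where
  "keel_ideal n = ideal_gen (keel_rels n)"

text \<open>Let A = R / I with R the polynomial ring (standard grading, variables in degree 1) and
  I a homogeneous ideal.  Elements of A and of free A-modules are represented by
  polynomials / vectors of polynomials modulo I.
  A linear graded free resolution of k = A/A_+ is
    ... --> A(-2)^{b 2} --d_2--> A(-1)^{b 1} --d_1--> A^{b 0} = A --> k --> 0,
  where (b 0 = 1) and the matrix of d_{i+1} (given by M i, rows < b i, columns < b (i+1))
  has entries homogeneous of degree 1 (linear forms), and the sequence is exact.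
  Exactness at A means the image of d_1 is the augmentation ideal A_+.\<close>

definition mat_app :: "nat \<Rightarrow> (nat \<Rightarrow> nat \<Rightarrow> 'a::comm_ring_1) \<Rightarrow> (nat \<Rightarrow> 'a) \<Rightarrow> nat \<Rightarrow> 'a" where
  "mat_app ncols M u r = (\<Sum>c<ncols. M r c * u c)"

definition linear_resolution_of_k ::
  "'k::field kpoly set \<Rightarrow> (nat \<Rightarrow> nat) \<Rightarrow> (nat \<Rightarrow> nat \<Rightarrow> nat \<Rightarrow> 'k kpoly) \<Rightarrow> bool" where
  "linear_resolution_of_k I b M \<longleftrightarrow>
     b 0 = 1
   \<and> (\<forall>i r c. r < b i \<and> c < b (Suc i) \<longrightarrow> linear_form (M i r c))
   \<and> (\<forall>f. (\<exists>w. f - mat_app (b 1) (M 0) w 0 \<in> I) \<longleftrightarrow>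
           (\<exists>g. f - g \<in> I \<and> Poly_Mapping.lookup g 0 = 0))
   \<and> (\<forall>i u. (\<forall>r<b i. mat_app (b (Suc i)) (M i) u r \<in> I) \<longrightarrow>
           (\<exists>w. \<forall>j<b (Suc i). u j - mat_app (b (Suc (Suc i))) (M (Suc i)) w j \<in> I))
   \<and> (\<forall>i w r. r < b i \<longrightarrow>
        mat_app (b (Suc i)) (M i) (mat_app (b (Suc (Suc i))) (M (Suc i)) w) r \<in> I)"

definition koszul :: "'k::field kpoly set \<Rightarrow> bool" where
  "koszul I \<longleftrightarrow> (\<exists>b M. linear_resolution_of_k I b M)"

end

theory Submission
  imports Defs
begin


datatype 'k A = A (a0: 'k) (a1: 'k) (a2: 'k) (a3: 'k) (a4: 'k) (a5: 'k) (a6: 'k)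

definition Bv :: "'k::comm_ring_1 A \<Rightarrow> 'k A \<Rightarrow> 'k" where
  "Bv a b = a1 a * a2 b + a2 a * a1 b - a3 a * a3 b - a4 a * a4 b - a5 a * a5 b"

instantiation A :: (comm_ring_1) comm_ring_1
begin
definition "0 = A 0 0 0 0 0 0 0"
definition "1 = A 1 0 0 0 0 0 0"
definition "a + b = A (a0 a + a0 b) (a1 a + a1 b) (a2 a + a2 b) (a3 a + a3 b) (a4 a + a4 b) (a5 a + a5 b) (a6 a + a6 b)"
definition "a - b = A (a0 a - a0 b) (a1 a - a1 b) (a2 a - a2 b) (a3 a - a3 b) (a4 a - a4 b) (a5 a - a5 b) (a6 a - a6 b)"
definition "- a = A (- a0 a) (- a1 a) (- a2 a) (- a3 a) (- a4 a) (- a5 a) (- a6 a)"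
definition "a * b = A (a0 a * a0 b) (a0 a * a1 b + a1 a * a0 b) (a0 a * a2 b + a2 a * a0 b)
   (a0 a * a3 b + a3 a * a0 b) (a0 a * a4 b + a4 a * a0 b) (a0 a * a5 b + a5 a * a0 b)
   (a0 a * a6 b + a6 a * a0 b + Bv a b)"
instance
  apply standard
  apply (auto simp: zero_A_def one_A_def plus_A_def minus_A_def uminus_A_def times_A_def Bv_def algebra_simps intro: A.expand)
  done
end

lemma A_sel_simps[simp]:
  "a0 (x + y) = a0 x + a0 y" "a1 (x + y) = a1 x + a1 y" "a2 (x + y) = a2 x + a2 y"
  "a3 (x + y) = a3 x + a3 y" "a4 (x + y) = a4 x + a4 y" "a5 (x + y) = a5 x + a5 y" "a6 (x + y) = a6 x + a6 y"
  "a0 (x - y) = a0 x - a0 y" "a1 (x - y) = a1 x - a1 y" "a2 (x - y) = a2 x - a2 y"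
  "a3 (x - y) = a3 x - a3 y" "a4 (x - y) = a4 x - a4 y" "a5 (x - y) = a5 x - a5 y" "a6 (x - y) = a6 x - a6 y"
  "a0 (- x) = - a0 x" "a1 (- x) = - a1 x" "a2 (- x) = - a2 x"
  "a3 (- x) = - a3 x" "a4 (- x) = - a4 x" "a5 (- x) = - a5 x" "a6 (- x) = - a6 x"
  "a0 0 = 0" "a1 0 = 0" "a2 0 = 0" "a3 0 = 0" "a4 0 = 0" "a5 0 = 0" "a6 0 = 0"
  "a0 1 = 1" "a1 1 = 0" "a2 1 = 0" "a3 1 = 0" "a4 1 = 0" "a5 1 = 0" "a6 1 = 0"
  by (simp_all add: plus_A_def minus_A_def uminus_A_def zero_A_def one_A_def)

lemma A_times_sel[simp]:
  "a0 (x * y) = a0 x * a0 y"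
  "a1 (x * y) = a0 x * a1 y + a1 x * a0 y" "a2 (x * y) = a0 x * a2 y + a2 x * a0 y"
  "a3 (x * y) = a0 x * a3 y + a3 x * a0 y" "a4 (x * y) = a0 x * a4 y + a4 x * a0 y"
  "a5 (x * y) = a0 x * a5 y + a5 x * a0 y" "a6 (x * y) = a0 x * a6 y + a6 x * a0 y + Bv x y"
  by (simp_all add: times_A_def)

lemma A_sum_sel[simp]:
  "a0 (sum f S) = (\<Sum>i\<in>S. a0 (f i))" "a1 (sum f S) = (\<Sum>i\<in>S. a1 (f i))"
  "a2 (sum f S) = (\<Sum>i\<in>S. a2 (f i))" "a3 (sum f S) = (\<Sum>i\<in>S. a3 (f i))"
  "a4 (sum f S) = (\<Sum>i\<in>S. a4 (f i))" "a5 (sum f S) = (\<Sum>i\<in>S. a5 (f i))"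
  "a6 (sum f S) = (\<Sum>i\<in>S. a6 (f i))"
  by (induction S rule: infinite_finite_induct; simp)+

lemma A_eqI: "a0 x = a0 y \<Longrightarrow> a1 x = a1 y \<Longrightarrow> a2 x = a2 y \<Longrightarrow> a3 x = a3 y \<Longrightarrow>
   a4 x = a4 y \<Longrightarrow> a5 x = a5 y \<Longrightarrow> a6 x = a6 y \<Longrightarrow> x = y"
  by (rule A.expand) simp




definition of_k :: "'k::comm_ring_1 \<Rightarrow> 'k A" where "of_k c = A c 0 0 0 0 0 0"

lemma of_k_sel[simp]: "a0 (of_k c) = c" "a1 (of_k c) = 0" "a2 (of_k c) = 0" "a3 (of_k c) = 0"
  "a4 (of_k c) = 0" "a5 (of_k c) = 0" "a6 (of_k c) = 0"
  by (simp_all add: of_k_def)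

lemma of_k_simps[simp]: "of_k 0 = 0" "of_k 1 = 1" "of_k (a + b) = of_k a + of_k b"
  "of_k (a * b) = of_k a * of_k b" "of_k (- a) = - of_k a" "of_k (a - b) = of_k a - of_k b"
  by (auto intro!: A_eqI simp: Bv_def)

lemma of_k_sum: "of_k (sum f S) = (\<Sum>i\<in>S. of_k (f i))"
  by (induction S rule: infinite_finite_induct; simp)

lemma of_k_mult_sel[simp]: "a0 (of_k c * x) = c * a0 x" "a1 (of_k c * x) = c * a1 x"
  "a2 (of_k c * x) = c * a2 x" "a3 (of_k c * x) = c * a3 x" "a4 (of_k c * x) = c * a4 x"
  "a5 (of_k c * x) = c * a5 x" "a6 (of_k c * x) = c * a6 x"
  by (simp_all add: Bv_def)

fun bet :: "nat \<Rightarrow> nat \<Rightarrow> 'k::comm_ring_1" where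
  "bet x y = (if (x = 0 \<and> y = 1) \<or> (x = 1 \<and> y = 0) then 1 else if x = y \<and> 2 \<le> x then -1 else 0)"
declare bet.simps[simp del]

section \<open>words\<close>

fun nrm :: "nat list \<Rightarrow> bool" where
  "nrm [] = True" | "nrm [x] = True" | "nrm (x # y # r) = (\<not> (x = 0 \<and> y = 1) \<and> nrm (y # r))"

definition NW :: "nat \<Rightarrow> nat list set" where
  "NW n = {w. length w = n \<and> set w \<subseteq> {..<5} \<and> nrm w}"

definition Wd :: "nat \<Rightarrow> nat list set" where
  "Wd n = {w. length w = n \<and> set w \<subseteq> {..<5}}"

lemma finite_Wd: "finite (Wd n)"
proof -
  have "Wd n = {w. set w \<subseteq> {..<5} \<and> length w = n}" by (auto simp: Wd_def)
  then show ?thesis using finite_lists_length_eq[of "{..<5::nat}" n] by simp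
qed

lemma NW_sub: "NW n \<subseteq> Wd n" by (auto simp: NW_def Wd_def)
lemma finite_NW: "finite (NW n)" using finite_Wd NW_sub finite_subset by blast

lemma nrm_tl: "nrm (x # w) \<Longrightarrow> nrm w"
  by (cases w) auto

lemma nrm_cons_ne0: "x \<noteq> 0 \<Longrightarrow> nrm w \<Longrightarrow> nrm (x # w)"
  by (cases w) auto

lemma nrm_cons_ne1: "nrm w \<Longrightarrow> (w = [] \<or> hd w \<noteq> 1) \<Longrightarrow> nrm (x # w)"
  by (cases w) auto

lemma NW_Cons: "x # w \<in> NW (Suc n) \<longleftrightarrow> x < 5 \<and> w \<in> NW n \<and> (x = 0 \<longrightarrow> w = [] \<or> hd w \<noteq> 1)"
  by (cases w) (auto simp: NW_def)

lemma NW_0: "NW 0 = {[]}" by (auto simp: NW_def)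

definition dl :: "nat list \<Rightarrow> nat list \<Rightarrow> 'k::comm_ring_1" where
  "dl w = (\<lambda>z. if z = w then 1 else 0)"

definition pre :: "nat \<Rightarrow> (nat list \<Rightarrow> 'k::comm_ring_1) \<Rightarrow> nat list \<Rightarrow> 'k" where
  "pre y m = (\<lambda>z. case z of [] \<Rightarrow> 0 | y' # z' \<Rightarrow> if y' = y then m z' else 0)"

lemma pre_simps[simp]: "pre y m [] = 0" "pre y m (y' # z) = (if y' = y then m z else 0)"
  by (simp_all add: pre_def)

fun act :: "nat \<Rightarrow> nat list \<Rightarrow> nat list \<Rightarrow> 'k::comm_ring_1" where
  "act x [] = dl [x]"
| "act x (y # w) = (if x = 0 \<and> y = 1 then
      (\<lambda>z. - pre 1 (act 0 w) z + dl (2#2#w) z + dl (3#3#w) z + dl (4#4#w) z)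
    else dl (x # y # w))"

lemma act_ne0: "x \<noteq> 0 \<Longrightarrow> act x w = dl (x # w)"
  by (cases w) auto

lemma act_supp: "w \<in> NW n \<Longrightarrow> x < 5 \<Longrightarrow> act x w z \<noteq> (0::'k::comm_ring_1) \<Longrightarrow> z \<in> NW (Suc n)"
proof (induction w arbitrary: x n z)
  case Nil
  then show ?case by (auto simp: dl_def NW_def split: if_splits)
next
  case (Cons y w)
  obtain n' where n: "n = Suc n'" using Cons.prems(1) by (cases n) (auto simp: NW_def)
  have w: "w \<in> NW n'" and y: "y < 5" using Cons.prems(1) n NW_Cons by auto
  show ?case
  proof (cases "x = 0 \<and> y = 1")
    case True
    have "pre 1 (act 0 w) z \<noteq> (0::'k) \<or> z = 2#2#w \<or> z = 3#3#w \<or> z = 4#4#w"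
    proof (rule ccontr)
      assume "\<not> ?thesis"
      then have "act x (y # w) z = (0::'k)" using True by (simp add: dl_def)
      then show False using Cons.prems(3) by simp
    qed
    then show ?thesis
    proof (elim disjE)
      assume "pre 1 (act 0 w) z \<noteq> (0::'k)"
      then obtain z' where z: "z = 1 # z'" and "act 0 w z' \<noteq> (0::'k)"
        by (cases z) (auto split: if_splits)
      then have "z' \<in> NW n" using Cons.IH[OF w, of 0 z'] n by simp
      then show ?thesis using z NW_Cons by (simp add: NW_def nrm_cons_ne0)
    next
      assume "z = 2#2#w" then show ?thesis using w n by (simp add: NW_Cons)
    next
      assume "z = 3#3#w" then show ?thesis using w n by (simp add: NW_Cons)
    next
      assume "z = 4#4#w" then show ?thesis using w n by (simp add: NW_Cons)
    qed
  next
    case False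
    then have "z = x # y # w" using Cons.prems(3) by (auto simp: dl_def split: if_splits)
    then show ?thesis using False Cons.prems(1,2) n by (auto simp: NW_Cons)
  qed
qed

definition ext :: "nat \<Rightarrow> nat \<Rightarrow> (nat list \<Rightarrow> 'k::comm_ring_1) \<Rightarrow> nat list \<Rightarrow> 'k" where
  "ext x n m = (\<lambda>z. \<Sum>w\<in>NW n. m w * act x w z)"

fun NF :: "nat list \<Rightarrow> nat list \<Rightarrow> 'k::comm_ring_1" where
  "NF [] = dl []"
| "NF (x # z) = ext x (length z) (NF z)"

definition supp_in :: "(nat list \<Rightarrow> 'k::zero) \<Rightarrow> nat list set \<Rightarrow> bool" where
  "supp_in m S \<longleftrightarrow> (\<forall>z. m z \<noteq> 0 \<longrightarrow> z \<in> S)"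

lemma ext_supp: "x < 5 \<Longrightarrow> supp_in (ext x n m) (NW (Suc n))"
  unfolding supp_in_def ext_def
  by (metis (no_types, lifting) act_supp mult_not_zero sum.neutral)

lemma NF_supp: "set z \<subseteq> {..<5} \<Longrightarrow> supp_in (NF z) (NW (length z))"
proof (induction z)
  case Nil then show ?case by (auto simp: supp_in_def dl_def NW_0)
next
  case (Cons a z) then show ?case using ext_supp[of a "length z" "NF z"] by simp
qed

lemma sum_dl: "finite S \<Longrightarrow> (\<Sum>w\<in>S. dl a w * f w) = (if a \<in> S then f a else 0)"
  by (simp add: dl_def if_distrib[of "\<lambda>x. x * _"] sum.delta' cong: if_cong)

lemma sum_dl': "finite S \<Longrightarrow> (\<Sum>w\<in>S. f w * dl a w) = (if a \<in> S then f a else 0)"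
  using sum_dl[of S a f] by (simp add: mult.commute)

lemma ext_dl: "w \<in> NW n \<Longrightarrow> ext x n (dl w) = act x w"
  by (rule ext) (simp add: ext_def sum_dl finite_NW)

lemma NF_nrm: "w \<in> NW n \<Longrightarrow> (NF w :: nat list \<Rightarrow> 'k::comm_ring_1) = dl w"
proof (induction w arbitrary: n)
  case Nil then show ?case by simp
next
  case (Cons x w)
  obtain n' where n: "n = Suc n'" using Cons.prems(1) by (cases n) (auto simp: NW_def)
  have w: "w \<in> NW n'" and x: "x < 5" and c: "x = 0 \<longrightarrow> w = [] \<or> hd w \<noteq> 1"
    using Cons.prems(1) n NW_Cons by auto
  have ln: "length w = n'" using w by (simp add: NW_def)
  have "(NF (x # w) :: nat list \<Rightarrow> 'k) = act x w" using Cons.IH[OF w] ext_dl[OF w] ln by simp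
  also have "\<dots> = dl (x # w)" using c by (cases w) auto
  finally show ?case .
qed

lemma ext_pre: "x \<noteq> 0 \<Longrightarrow> supp_in m (NW n) \<Longrightarrow> ext x n m = pre x m"
proof (rule ext)
  fix z assume x: "x \<noteq> 0" and s: "supp_in m (NW n)"
  have "ext x n m z = (\<Sum>w\<in>NW n. dl (x # w) z * m w)"
    by (simp add: ext_def act_ne0[OF x] mult.commute)
  also have "\<dots> = pre x m z"
  proof (cases z)
    case Nil then show ?thesis by (simp add: dl_def)
  next
    case (Cons y z')
    have "(\<Sum>w\<in>NW n. dl (x # w) (y # z') * m w) = (\<Sum>w\<in>NW n. dl z' w * (if y = x then m w else 0))"
      by (rule sum.cong) (auto simp: dl_def)
    also have "\<dots> = (if z' \<in> NW n then (if y = x then m z' else 0) else 0)"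
      by (simp add: sum_dl finite_NW)
    also have "\<dots> = pre x m z" using s Cons by (auto simp: supp_in_def)
    finally show ?thesis using Cons by simp
  qed
  finally show "ext x n m z = pre x m z" .
qed

lemma NF_pre: "x \<noteq> 0 \<Longrightarrow> set z \<subseteq> {..<5} \<Longrightarrow> NF (x # z) = pre x (NF z)"
  using ext_pre[OF _ NF_supp[of z]] by simp

lemma sum5: "(\<Sum>x<(5::nat). f x) = f 0 + f 1 + f 2 + f 3 + (f 4 :: 'a::comm_monoid_add)"
  by (simp add: eval_nat_numeral lessThan_Suc add.commute add.left_commute)

lemma bet_sum: "(\<Sum>x<5. \<Sum>y<5. bet x y * g x y) = g 0 1 + g 1 0 - g 2 2 - g 3 3 - (g 4 4 :: 'k::comm_ring_1)"
  by (simp add: sum5 bet.simps)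

lemma bet_sumA: "(\<Sum>x<5. \<Sum>y<5. of_k (bet x y) * g x y) = g 0 1 + g 1 0 - g 2 2 - g 3 3 - (g 4 4 :: 'k::comm_ring_1 A)"
  by (simp add: sum5 bet.simps)

definition inC :: "(nat list \<Rightarrow> 'k::comm_ring_1 A) \<Rightarrow> bool" where
  "inC T \<longleftrightarrow> (\<forall>p q. set p \<subseteq> {..<5} \<longrightarrow> set q \<subseteq> {..<5} \<longrightarrow>
      (\<Sum>x<5. \<Sum>y<5. of_k (bet x y) * T (p @ x # y # q)) = 0)"

lemma inC_Cons: assumes T: "inC T" and a: "a < 5" shows "inC (\<lambda>z. T (a # z))"
proof (unfold inC_def, intro allI impI)
  fix p q :: "nat list" assume p: "set p \<subseteq> {..<5}" and q: "set q \<subseteq> {..<5}"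
  show "(\<Sum>x<5. \<Sum>y<5. of_k (bet x y) * T (a # p @ x # y # q)) = 0"
    using T[unfolded inC_def, rule_format, of "a # p" q] a p q by simp
qed

lemma inC_base: "inC T \<Longrightarrow> set q \<subseteq> {..<5} \<Longrightarrow>
   T (0 # 1 # q) + T (1 # 0 # q) - T (2 # 2 # q) - T (3 # 3 # q) - T (4 # 4 # q) = 0"
proof -
  assume T: "inC T" and q: "set q \<subseteq> {..<5}"
  have "(\<Sum>x<5. \<Sum>y<5. of_k (bet x y) * T ([] @ x # y # q)) = 0"
    using T[unfolded inC_def, rule_format, of "[]" q] q by simp
  then show ?thesis using bet_sumA[of "\<lambda>x y. T (x # y # q)"] by simp
qed

lemma sum_dlA: "finite S \<Longrightarrow> (\<Sum>w\<in>S. of_k (dl a w) * f w) = (if a \<in> S then f a else (0 :: 'k::comm_ring_1 A))"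
proof -
  assume S: "finite S"
  have "(\<Sum>w\<in>S. of_k (dl a w) * f w) = (\<Sum>w\<in>S. if w = a then f w else 0)"
    by (rule sum.cong) (auto simp: dl_def)
  then show ?thesis using S by (simp add: sum.delta')
qed

lemma sum_pre:
  assumes y: "y \<noteq> 0" "y < 5" and s: "supp_in m (NW n)"
  shows "(\<Sum>w'\<in>NW (Suc n). of_k (pre y m w') * f w') = (\<Sum>w\<in>NW n. of_k (m w) * (f (y # w) :: 'k::comm_ring_1 A))"
proof -
  have sub: "(\<lambda>w. y # w) ` NW n \<subseteq> NW (Suc n)" using y by (auto simp: NW_Cons)
  have "(\<Sum>w\<in>NW n. of_k (m w) * f (y # w)) = (\<Sum>w'\<in>(\<lambda>w. y # w) ` NW n. of_k (pre y m w') * f w')"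
    by (subst sum.reindex) (auto simp: inj_on_def)
  also have "\<dots> = (\<Sum>w'\<in>NW (Suc n). of_k (pre y m w') * f w')"
  proof (rule sum.mono_neutral_left[OF finite_NW sub])
    show "\<forall>i\<in>NW (Suc n) - (\<lambda>w. y # w) ` NW n. of_k (pre y m i) * f i = 0"
    proof
      fix i assume i: "i \<in> NW (Suc n) - (\<lambda>w. y # w) ` NW n"
      obtain a r where ir: "i = a # r" using i by (cases i) (auto simp: NW_def)
      then have r: "r \<in> NW n" using i NW_Cons by auto
      have "a \<noteq> y" using i ir r by (auto simp: image_iff)
      then show "of_k (pre y m i) * f i = 0" using ir by simp
    qed
  qed
  finally show ?thesis by simp
qed

lemma clA: "inC (T :: nat list \<Rightarrow> 'k::comm_ring_1 A) \<Longrightarrow> w \<in> NW n \<Longrightarrow> x < 5 \<Longrightarrow>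
   T (x # w) = (\<Sum>w'\<in>NW (Suc n). of_k (act x w w') * T w')"
proof (induction w arbitrary: T x n)
  case Nil
  then have "[x] \<in> NW (Suc n)" by (simp add: NW_def)
  then show ?case by (simp add: sum_dlA finite_NW)
next
  case (Cons y w)
  obtain n' where n: "n = Suc n'" using Cons.prems(2) by (cases n) (auto simp: NW_def)
  have w: "w \<in> NW n'" and y: "y < 5" using Cons.prems(2) n NW_Cons by auto
  have qs: "set w \<subseteq> {..<5}" using w by (simp add: NW_def)
  show ?case
  proof (cases "x = 0 \<and> y = 1")
    case True
    have m: "w \<in> NW n' \<Longrightarrow> l \<noteq> 0 \<Longrightarrow> l < 5 \<Longrightarrow> l # l # w \<in> NW (Suc n)" for l
      using n by (simp add: NW_Cons)
    let ?S = "\<lambda>g. \<Sum>w'\<in>NW (Suc n). of_k (g w') * T w'"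
    have "?S (act x (y # w)) = - ?S (pre 1 (act 0 w)) + ?S (dl (2#2#w)) + ?S (dl (3#3#w)) + ?S (dl (4#4#w))"
      using True by (simp add: sum.distrib sum_negf distrib_right sum_subtractf left_diff_distrib)
    also have "?S (pre 1 (act 0 w)) = (\<Sum>w''\<in>NW n. of_k (act 0 w w'') * T (1 # w''))"
    proof (rule sum_pre)
      show "supp_in (act 0 w) (NW n)" using act_supp[OF w, of 0] n by (auto simp: supp_in_def)
    qed auto
    also have "\<dots> = T (1 # 0 # w)"
      using Cons.IH[OF inC_Cons[OF Cons.prems(1), of 1] w, of 0] n by simp
    finally have "?S (act x (y # w)) = - T (1 # 0 # w) + T (2#2#w) + T (3#3#w) + T (4#4#w)"
      using m[OF w] by (simp add: sum_dlA finite_NW)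
    also have "\<dots> = T (0 # 1 # w)"
    proof -
      have h: "T (0 # 1 # w) + T (1 # 0 # w) - T (2 # 2 # w) - T (3 # 3 # w) - T (4 # 4 # w) = 0"
        using inC_base[OF Cons.prems(1) qs] .
      have "T (0 # 1 # w) = (T (0 # 1 # w) + T (1 # 0 # w) - T (2 # 2 # w) - T (3 # 3 # w) - T (4 # 4 # w))
          - T (1 # 0 # w) + T (2#2#w) + T (3#3#w) + T (4#4#w)" by (simp add: algebra_simps)
      then show ?thesis unfolding h by simp
    qed
    finally show ?thesis using True by simp
  next
    case False
    then have mem: "x # y # w \<in> NW (Suc n)" using Cons.prems n by (auto simp: NW_Cons)
    have e: "act x (y # w) = dl (x # y # w)" using False by auto
    show ?thesis unfolding e using mem by (simp add: sum_dlA finite_NW)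
  qed
qed




lemma clB: "inC (T :: nat list \<Rightarrow> 'k::comm_ring_1 A) \<Longrightarrow> set z \<subseteq> {..<5} \<Longrightarrow>
   T z = (\<Sum>w\<in>NW (length z). of_k (NF z w) * T w)"
proof (induction z arbitrary: T)
  case Nil
  then show ?case by (simp add: NW_0 dl_def)
next
  case (Cons x z)
  let ?n = "length z"
  have x: "x < 5" and z: "set z \<subseteq> {..<5}" using Cons.prems by auto
  have "T (x # z) = (\<Sum>w\<in>NW ?n. of_k (NF z w) * T (x # w))"
    using Cons.IH[OF inC_Cons[OF Cons.prems(1) x] z] .
  also have "\<dots> = (\<Sum>w\<in>NW ?n. of_k (NF z w) * (\<Sum>w'\<in>NW (Suc ?n). of_k (act x w w') * T w'))"
    by (rule sum.cong[OF refl]) (simp add: clA[OF Cons.prems(1) _ x])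
  also have "\<dots> = (\<Sum>w\<in>NW ?n. \<Sum>w'\<in>NW (Suc ?n). of_k (NF z w * act x w w') * T w')"
    by (simp add: sum_distrib_left mult.assoc)
  also have "\<dots> = (\<Sum>w'\<in>NW (Suc ?n). \<Sum>w\<in>NW ?n. of_k (NF z w * act x w w') * T w')"
    by (rule sum.swap)
  also have "\<dots> = (\<Sum>w'\<in>NW (Suc ?n). of_k (NF (x # z) w') * T w')"
    by (rule sum.cong[OF refl]) (simp add: ext_def of_k_sum sum_distrib_right)
  finally show ?case by simp
qed

lemma swap3: "(\<Sum>x\<in>X. \<Sum>y\<in>Y. b x y * (\<Sum>w\<in>W. a w * e x y w)) =
   (\<Sum>w\<in>W. a w * (\<Sum>x\<in>X. \<Sum>y\<in>Y. b x y * e x y w :: 'k::comm_ring_1))"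
proof -
  have "(\<Sum>x\<in>X. \<Sum>y\<in>Y. b x y * (\<Sum>w\<in>W. a w * e x y w)) = (\<Sum>x\<in>X. \<Sum>y\<in>Y. \<Sum>w\<in>W. a w * (b x y * e x y w))"
    by (simp add: sum_distrib_left mult.left_commute)
  also have "\<dots> = (\<Sum>x\<in>X. \<Sum>w\<in>W. \<Sum>y\<in>Y. a w * (b x y * e x y w))"
    by (rule sum.cong[OF refl], rule sum.swap)
  also have "\<dots> = (\<Sum>w\<in>W. \<Sum>x\<in>X. \<Sum>y\<in>Y. a w * (b x y * e x y w))"
    by (rule sum.swap)
  also have "\<dots> = (\<Sum>w\<in>W. a w * (\<Sum>x\<in>X. \<Sum>y\<in>Y. b x y * e x y w))"
    by (simp add: sum_distrib_left)
  finally show ?thesis .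
qed

lemma ext_lin2: "(\<Sum>x\<in>X. \<Sum>y\<in>Y. b x y * ext a L (g x y) z) = ext a L (\<lambda>w. \<Sum>x\<in>X. \<Sum>y\<in>Y. b x y * (g x y w :: 'k::comm_ring_1)) z"
proof -
  have "(\<Sum>x\<in>X. \<Sum>y\<in>Y. b x y * ext a L (g x y) z) = (\<Sum>x\<in>X. \<Sum>y\<in>Y. b x y * (\<Sum>w\<in>NW L. act a w z * g x y w))"
    by (simp add: ext_def mult.commute)
  also have "\<dots> = (\<Sum>w\<in>NW L. act a w z * (\<Sum>x\<in>X. \<Sum>y\<in>Y. b x y * g x y w))"
    by (rule swap3)
  finally show ?thesis by (simp add: ext_def mult.commute)
qed

lemma KB: assumes w1: "w1 \<in> NW n"
  shows "(\<Sum>x<5. \<Sum>y<5. bet x y * ext x (Suc n) (act y w1) z) = (0::'k::comm_ring_1)"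
proof -
  have s0: "supp_in (act 0 w1 :: _ \<Rightarrow> 'k) (NW (Suc n))" using act_supp[OF w1, of 0] by (auto simp: supp_in_def)
  have e1: "ext 1 (Suc n) (act 0 w1) = (pre 1 (act 0 w1) :: _ \<Rightarrow> 'k)" by (rule ext_pre[OF _ s0]) simp
  have m1: "1 # w1 \<in> NW (Suc n)" using w1 by (simp add: NW_Cons)
  have e0: "ext 0 (Suc n) (act 1 w1) = (act 0 (1 # w1) :: _ \<Rightarrow> 'k)"
    using ext_dl[OF m1, of 0] by (simp add: act_ne0)
  have el: "l \<noteq> 0 \<Longrightarrow> l < 5 \<Longrightarrow> ext l (Suc n) (act l w1) = (dl (l # l # w1) :: _ \<Rightarrow> 'k)" for l
  proof -
    assume l: "l \<noteq> 0" "l < 5"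
    then have "l # w1 \<in> NW (Suc n)" using w1 by (simp add: NW_Cons)
    then show ?thesis using ext_dl[of "l # w1" "Suc n" l] l by (simp add: act_ne0)
  qed
  have el2: "ext 2 (Suc n) (act 2 w1) = (dl (2 # 2 # w1) :: _ \<Rightarrow> 'k)" by (rule el) auto
  have el3: "ext 3 (Suc n) (act 3 w1) = (dl (3 # 3 # w1) :: _ \<Rightarrow> 'k)" by (rule el) auto
  have el4: "ext 4 (Suc n) (act 4 w1) = (dl (4 # 4 # w1) :: _ \<Rightarrow> 'k)" by (rule el) auto
  show ?thesis
    unfolding bet_sum e0 e1 el2 el3 el4 by simp
qed

lemma E1: "set q \<subseteq> {..<5} \<Longrightarrow> (\<Sum>x<5. \<Sum>y<5. bet x y * NF (p @ x # y # q) w') = (0::'k::comm_ring_1)"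
proof (induction p arbitrary: w')
  case Nil
  let ?n = "length q"
  have "(\<Sum>x<5. \<Sum>y<5. bet x y * (NF (x # y # q) w' :: 'k)) =
        (\<Sum>x<5. \<Sum>y<5. bet x y * (\<Sum>w1\<in>NW ?n. NF q w1 * ext x (Suc ?n) (act y w1) w'))"
  proof (intro sum.cong refl)
    fix x y
    have "NF (x # y # q) w' = ext x (Suc ?n) (\<lambda>z. \<Sum>w1\<in>NW ?n. NF q w1 * act y w1 z) w'"
      by (simp add: ext_def[of y])
    also have "\<dots> = (\<Sum>w1\<in>NW ?n. NF q w1 * (ext x (Suc ?n) (act y w1) w' :: 'k))"
      unfolding ext_def by (simp add: sum_distrib_right sum_distrib_left mult.assoc sum.swap[of _ "NW (Suc ?n)"])
    finally show "bet x y * NF (x # y # q) w' = bet x y * (\<Sum>w1\<in>NW ?n. NF q w1 * (ext x (Suc ?n) (act y w1) w' :: 'k))"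
      by simp
  qed
  also have "\<dots> = (\<Sum>w1\<in>NW ?n. NF q w1 * (\<Sum>x<5. \<Sum>y<5. bet x y * ext x (Suc ?n) (act y w1) w'))"
    by (rule swap3)
  also have "\<dots> = 0" by (simp add: KB)
  finally show ?case by simp
next
  case (Cons a p)
  let ?L = "length (p @ 0 # 0 # q)"
  have "(\<Sum>x<5. \<Sum>y<5. bet x y * (NF ((a # p) @ x # y # q) w' :: 'k)) =
        (\<Sum>x<5. \<Sum>y<5. bet x y * ext a ?L (NF (p @ x # y # q)) w')"
    by simp
  also have "\<dots> = ext a ?L (\<lambda>w. \<Sum>x<5. \<Sum>y<5. bet x y * NF (p @ x # y # q) w) w'"
    by (rule ext_lin2)
  also have "\<dots> = 0" using Cons by (simp add: ext_def)
  finally show ?case .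
qed

lemma inC_NF: "inC (\<lambda>z. of_k (NF z w) * (a :: 'k::comm_ring_1 A))"
  unfolding inC_def
proof (intro allI impI)
  fix p q :: "nat list" assume q: "set q \<subseteq> {..<5}"
  have "(\<Sum>x<5. \<Sum>y<5. of_k (bet x y) * (of_k (NF (p @ x # y # q) w) * a)) =
     of_k (\<Sum>x<5. \<Sum>y<5. bet x y * NF (p @ x # y # q) w) * a"
    by (simp add: of_k_sum sum_distrib_right mult.assoc)
  also have "\<dots> = 0"
  proof -
    have "(\<Sum>x<5. \<Sum>y<5. bet x y * NF (p @ x # y # q) w) = (0::'k)" by (rule E1[OF q])
    then show ?thesis by simp
  qed
  finally show "(\<Sum>x<5. \<Sum>y<5. of_k (bet x y) * (of_k (NF (p @ x # y # q) w) * a)) = 0" .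
qed

lemma inC_sum: "finite J \<Longrightarrow> (\<And>j. j \<in> J \<Longrightarrow> inC (T j)) \<Longrightarrow> inC (\<lambda>z. \<Sum>j\<in>J. T j z)"
  unfolding inC_def
  by (simp add: sum_distrib_left sum.swap[of _ J])




lemma Bv_of_k[simp]: "Bv (of_k c) x = 0" "Bv x (of_k c) = 0" by (simp_all add: Bv_def)

definition ev :: "nat \<Rightarrow> 'k::comm_ring_1 A" where
  "ev x = A 0 (if x = 0 then 1 else 0) (if x = 1 then 1 else 0) (if x = 2 then 1 else 0)
     (if x = 3 then 1 else 0) (if x = 4 then 1 else 0) 0"

definition vc :: "nat \<Rightarrow> 'k::comm_ring_1 A \<Rightarrow> 'k" where
  "vc y a = (if y = 0 then a1 a else if y = 1 then a2 a else if y = 2 then a3 a else if y = 3 then a4 a else a5 a)"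

lemma vc_simps[simp]: "vc y (a + b) = vc y a + vc y b" "vc y (a - b) = vc y a - vc y b"
  "vc y (- a) = - vc y a" "vc y 0 = 0" "vc y (of_k c * a) = c * vc y a"
  "vc y (sum f S) = (\<Sum>i\<in>S. vc y (f i))"
  by (auto simp: vc_def)

lemma ev_sel[simp]: "a0 (ev x) = 0" "a6 (ev x) = 0"
  by (simp_all add: ev_def)

lemma lt5: "(x::nat) < 5 \<Longrightarrow> x = 0 \<or> x = 1 \<or> x = 2 \<or> x = 3 \<or> x = 4" by presburger

lemma Bv_ev: "x < 5 \<Longrightarrow> Bv (ev x) b = (\<Sum>y<5. bet x y * vc y b)"
  by (drule lt5) (auto simp: Bv_def ev_def sum5 vc_def bet.simps)

lemma bet_sym: "bet x y = bet y x"
  by (auto simp: bet.simps)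

definition D :: "(nat list \<Rightarrow> 'k::comm_ring_1 A) \<Rightarrow> nat list \<Rightarrow> 'k A" where
  "D T z = (\<Sum>x<5. ev x * T (x # z))"

lemma D_a0: "a0 (D T z) = 0" by (simp add: D_def)
lemma D_vc: "y < 5 \<Longrightarrow> vc y (D T z) = a0 (T (y # z))"
  by (drule lt5) (auto simp: D_def vc_def ev_def sum5 Bv_def)
lemma D_a6: "a6 (D T z) = (\<Sum>x<5. \<Sum>y<5. bet x y * vc y (T (x # z)))"
  by (simp add: D_def Bv_ev)

lemma A_eq_vc: "a0 a = a0 b \<Longrightarrow> (\<And>y. y < 5 \<Longrightarrow> vc y a = vc y b) \<Longrightarrow> a6 a = a6 b \<Longrightarrow> a = b"
proof -
  assume h0: "a0 a = a0 b" and h: "\<And>y. y < 5 \<Longrightarrow> vc y a = vc y b" and h6: "a6 a = a6 b"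
  have "vc 0 a = vc 0 b" "vc 1 a = vc 1 b" "vc 2 a = vc 2 b" "vc 3 a = vc 3 b" "vc 4 a = vc 4 b"
    by (auto intro: h)
  then show ?thesis using h0 h6 by (intro A_eqI) (simp_all add: vc_def)
qed

lemma vc_ev: "y < 5 \<Longrightarrow> vc y (ev x) = (if y = x then 1 else 0)"
  by (auto simp: vc_def ev_def)

lemma inC_add: "inC S \<Longrightarrow> inC T \<Longrightarrow> inC (\<lambda>z. S z + T z)"
  unfolding inC_def by (simp add: distrib_left sum.distrib)

lemma inC_ofk: assumes "\<And>p x y q. set p \<subseteq> {..<5} \<Longrightarrow> set q \<subseteq> {..<5} \<Longrightarrow>
    (\<Sum>x<5. \<Sum>y<5. bet x y * f (p @ x # y # q)) = (0::'k::comm_ring_1)"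
  shows "inC (\<lambda>z. of_k (f z))"
  unfolding inC_def
proof (intro allI impI)
  fix p q :: "nat list" assume "set p \<subseteq> {..<5}" "set q \<subseteq> {..<5}"
  then have "of_k (\<Sum>x<5. \<Sum>y<5. bet x y * f (p @ x # y # q)) = 0" using assms by simp
  then show "(\<Sum>x<5. \<Sum>y<5. of_k (bet x y) * of_k (f (p @ x # y # q))) = 0"
    by (simp add: of_k_sum)
qed

lemma exactA:
  assumes U: "inC (U :: nat list \<Rightarrow> 'k::comm_ring_1 A)" and DU: "\<And>z. z \<in> Wd n \<Longrightarrow> D U z = 0"
  shows "\<exists>S. inC S \<and> (\<forall>z\<in>Wd (Suc n). D S z = U z)"
proof -
  define S0 :: "nat list \<Rightarrow> 'k" where
    "S0 w = (if length w = Suc (Suc n) then (case w of [] \<Rightarrow> 0 | y # z \<Rightarrow> vc y (U z)) else 0)" for w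
  define r :: "nat list \<Rightarrow> 'k" where
    "r w = (\<Sum>w'\<in>NW (Suc n). NF w (2 # w') * (- a6 (U w')))" for w
  define S where "S w = of_k (S0 w) + of_k (r w) * ev 2" for w
  have iS0: "inC (\<lambda>w. of_k (S0 w))"
  proof (rule inC_ofk)
    fix p q :: "nat list" assume p: "set p \<subseteq> {..<5}" and q: "set q \<subseteq> {..<5}"
    show "(\<Sum>x<5. \<Sum>y<5. bet x y * S0 (p @ x # y # q)) = 0"
    proof (cases "length p + length q = n")
      case False
      then show ?thesis by (simp add: S0_def)
    next
      case True
      show ?thesis
      proof (cases p)
        case Nil
        then have qn: "q \<in> Wd n" using True q by (simp add: Wd_def)
        have "(\<Sum>x<5. \<Sum>y<5. bet x y * S0 (p @ x # y # q)) = (\<Sum>x<5. \<Sum>y<5. bet x y * vc x (U (y # q)))"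
          using Nil True by (simp add: S0_def)
        also have "\<dots> = (\<Sum>y<5. \<Sum>x<5. bet y x * vc x (U (y # q)))"
          by (subst sum.swap) (simp add: bet_sym)
        also have "\<dots> = a6 (D U q)" by (simp add: D_a6)
        also have "\<dots> = 0" using DU[OF qn] by simp
        finally show ?thesis .
      next
        case (Cons a p')
        then have a: "a < 5" and p': "set p' \<subseteq> {..<5}" using p by auto
        have "(\<Sum>x<5. \<Sum>y<5. bet x y * S0 (p @ x # y # q)) = (\<Sum>x<5. \<Sum>y<5. bet x y * vc a (U (p' @ x # y # q)))"
          using Cons True by (simp add: S0_def)
        also have "\<dots> = vc a (\<Sum>x<5. \<Sum>y<5. of_k (bet x y) * U (p' @ x # y # q))" by simp
        also have "\<dots> = 0" using U[unfolded inC_def, rule_format, OF p' q] by simp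
        finally show ?thesis .
      qed
    qed
  qed
  have iR: "inC (\<lambda>w. of_k (r w) * ev 2)"
  proof -
    have "inC (\<lambda>w. \<Sum>w'\<in>NW (Suc n). of_k (NF w (2 # w')) * (of_k (- a6 (U w')) * ev 2))"
      by (rule inC_sum[OF finite_NW]) (rule inC_NF)
    moreover have "(\<lambda>w. \<Sum>w'\<in>NW (Suc n). of_k (NF w (2 # w')) * (of_k (- a6 (U w')) * ev 2)) = (\<lambda>w. of_k (r w) * ev 2)"
      by (simp add: r_def of_k_sum sum_distrib_right mult.assoc del: of_k_simps) (simp add: mult.assoc)
    ultimately show ?thesis by simp
  qed
  have iS: "inC S" unfolding S_def using inC_add[OF iS0 iR] .
  have "D S z = U z" if z: "z \<in> Wd (Suc n)" for z
  proof (rule A_eq_vc)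
    obtain y z' where zz: "z = y # z'" using z by (cases z) (auto simp: Wd_def)
    have y: "y < 5" and z': "z' \<in> Wd n" using z zz by (auto simp: Wd_def)
    have "a0 (U z) = vc y (D U z')" using D_vc[OF y, of U z'] zz by simp
    then show "a0 (D S z) = a0 (U z)" using DU[OF z'] by (simp add: D_a0)
  next
    fix y :: nat assume y: "y < 5"
    have "vc y (D S z) = a0 (S (y # z))" by (rule D_vc[OF y])
    also have "\<dots> = vc y (U z)" using z by (simp add: S_def S0_def Wd_def)
    finally show "vc y (D S z) = vc y (U z)" .
  next
    have zs: "set z \<subseteq> {..<5}" and lz: "length z = Suc n" using z by (auto simp: Wd_def)
    have vS: "y < 5 \<Longrightarrow> vc y (S w) = (if y = 2 then r w else 0)" for y w
      by (simp add: S_def vc_ev) (simp add: vc_def)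
    have "a6 (D S z) = (\<Sum>x<5. \<Sum>y<5. bet x y * vc y (S (x # z)))" by (rule D_a6)
    also have "\<dots> = (\<Sum>x<5. \<Sum>y<5. if y = 2 then bet x y * r (x # z) else 0)"
      by (intro sum.cong refl) (simp add: vS)
    also have "\<dots> = (\<Sum>x<5. bet x 2 * r (x # z))"
      by (simp add: sum.delta)
    also have "\<dots> = - r (2 # z)" by (simp add: sum5 bet.simps)
    also have "\<dots> = (\<Sum>w'\<in>NW (Suc n). NF z w' * a6 (U w'))"
    proof -
      have e: "NF (2 # z) = (pre 2 (NF z) :: _ \<Rightarrow> 'k)" by (rule NF_pre[OF _ zs]) simp
      show ?thesis unfolding r_def e by (simp add: sum_negf)
    qed
    also have "\<dots> = a6 (U z)"
      using arg_cong[OF clB[OF U zs], of a6] lz by (simp add: mult.commute)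
    finally show "a6 (D S z) = a6 (U z)" .
  qed
  then show ?thesis using iS by blast
qed




definition mon :: "(nat set \<Rightarrow> 'k::comm_ring_1 A) \<Rightarrow> (nat set \<Rightarrow>\<^sub>0 nat) \<Rightarrow> 'k A" where
  "mon val m = (\<Prod>S\<in>Poly_Mapping.keys m. val S ^ Poly_Mapping.lookup m S)"

definition evl :: "(nat set \<Rightarrow> 'k::comm_ring_1 A) \<Rightarrow> 'k kpoly \<Rightarrow> 'k A" where
  "evl val p = (\<Sum>m\<in>Poly_Mapping.keys p. of_k (Poly_Mapping.lookup p m) * mon val m)"

lemma mon_superset: "finite K \<Longrightarrow> Poly_Mapping.keys m \<subseteq> K \<Longrightarrow>
   mon val m = (\<Prod>S\<in>K. val S ^ Poly_Mapping.lookup m S)"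
  unfolding mon_def
  by (rule prod.mono_neutral_left) (auto simp: in_keys_iff)

lemma evl_superset: "finite K \<Longrightarrow> Poly_Mapping.keys p \<subseteq> K \<Longrightarrow>
   evl val p = (\<Sum>m\<in>K. of_k (Poly_Mapping.lookup p m) * mon val m)"
  unfolding evl_def
  by (rule sum.mono_neutral_left) (auto simp: in_keys_iff)

lemma mon_add: "mon val (m + m') = mon val m * mon val m'"
proof -
  let ?K = "Poly_Mapping.keys m \<union> Poly_Mapping.keys m'"
  have f: "finite ?K" by simp
  have "mon val (m + m') = (\<Prod>S\<in>?K. val S ^ Poly_Mapping.lookup (m + m') S)"
    by (rule mon_superset[OF f]) (use keys_add[of m m'] in auto)
  also have "\<dots> = (\<Prod>S\<in>?K. val S ^ Poly_Mapping.lookup m S) * (\<Prod>S\<in>?K. val S ^ Poly_Mapping.lookup m' S)"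
    by (simp add: lookup_add power_add prod.distrib)
  also have "\<dots> = mon val m * mon val m'"
    by (simp add: mon_superset[OF f])
  finally show ?thesis .
qed

lemma mon_zero[simp]: "mon val 0 = 1" by (simp add: mon_def)

lemma mon_single: "mon val (Poly_Mapping.single S 1) = val S" unfolding mon_def by simp

lemma evl_add: "evl val (p + q) = evl val p + evl val q"
proof -
  let ?K = "Poly_Mapping.keys p \<union> Poly_Mapping.keys q"
  have f: "finite ?K" by simp
  have "evl val (p + q) = (\<Sum>m\<in>?K. of_k (Poly_Mapping.lookup (p + q) m) * mon val m)"
    by (rule evl_superset[OF f]) (use keys_add[of p q] in auto)
  also have "\<dots> = evl val p + evl val q"
    by (simp add: evl_superset[OF f] lookup_add sum.distrib distrib_right)
  finally show ?thesis .
qed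

lemma evl_zero[simp]: "evl val 0 = 0" by (simp add: evl_def)

lemma evl_uminus: "evl val (- p) = - evl val p"
proof -
  have "evl val p + evl val (- p) = 0" using evl_add[of val p "- p"] by simp
  then show ?thesis by (metis neg_eq_iff_add_eq_0)
qed

lemma evl_diff: "evl val (p - q) = evl val p - evl val q"
  using evl_add[of val p "- q"] evl_uminus[of val q] by simp

lemma evl_sum: "evl val (sum f S) = (\<Sum>i\<in>S. evl val (f i))"
  by (induction S rule: infinite_finite_induct) (simp_all add: evl_add)

lemma evl_single: "evl val (Poly_Mapping.single m c) = of_k c * mon val m"
  by (cases "c = 0") (simp_all add: evl_def)

lemma pm_expand: "p = (\<Sum>m\<in>Poly_Mapping.keys p. Poly_Mapping.single m (Poly_Mapping.lookup p m))"
  by (rule poly_mapping_eqI) (simp add: lookup_sum lookup_single when_def in_keys_iff sum.delta' cong: if_cong)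

lemma evl_mult: "evl val (p * q) = evl val p * evl val q"
proof -
  have "p * q = (\<Sum>m\<in>Poly_Mapping.keys p. \<Sum>m'\<in>Poly_Mapping.keys q.
      Poly_Mapping.single m (Poly_Mapping.lookup p m) * Poly_Mapping.single m' (Poly_Mapping.lookup q m'))"
    by (subst pm_expand[of p], subst pm_expand[of q]) (rule sum_product)
  then have "evl val (p * q) = (\<Sum>m\<in>Poly_Mapping.keys p. \<Sum>m'\<in>Poly_Mapping.keys q.
      of_k (Poly_Mapping.lookup p m) * mon val m * (of_k (Poly_Mapping.lookup q m') * mon val m'))"
    by (simp add: evl_sum mult_single evl_single mon_add ac_simps)
  also have "\<dots> = evl val p * evl val q"
    unfolding evl_def by (rule sum_product[symmetric])
  finally show ?thesis .
qed

lemma evl_ideal: "x \<in> ideal_gen G \<Longrightarrow> (\<And>g. g \<in> G \<Longrightarrow> evl val g = 0) \<Longrightarrow> evl val x = 0"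
  by (induction rule: ideal_gen.induct) (auto simp: evl_add evl_mult)

definition Cst :: "'k::comm_ring_1 \<Rightarrow> 'k kpoly" where "Cst c = Poly_Mapping.single 0 c"

lemma Cst_simps: "Cst (a + b) = Cst a + Cst b" "Cst (a * b) = Cst a * Cst b" "Cst 0 = 0" "Cst 1 = 1"
  "Cst (- a) = - Cst a" "Cst (a - b) = Cst a - Cst b"
  by (simp_all add: Cst_def single_add mult_single single_uminus single_diff)

lemma Cst_sum: "Cst (sum f S) = (\<Sum>i\<in>S. Cst (f i))"
  by (induction S rule: infinite_finite_induct) (simp_all add: Cst_simps)

lemma evl_Cst[simp]: "evl val (Cst c) = of_k c" by (simp add: Cst_def evl_single)

lemma evl_var[simp]: "evl val (var S) = val S" unfolding var_def evl_single mon_single by simp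




lemma U5: "{1..5::nat} = {1,2,3,4,5}" by auto

lemma card_cmpl: "S \<subseteq> {1..5} \<Longrightarrow> card (cmpl 5 S) = 5 - card S"
  unfolding cmpl_def by (subst card_Diff_subset) (auto intro: finite_subset)

lemma cmpl_cmpl: "S \<subseteq> {1..5} \<Longrightarrow> cmpl 5 (cmpl 5 S) = S"
  unfolding cmpl_def by auto

lemma cmpl_sub: "cmpl 5 S \<subseteq> {1..5}" unfolding cmpl_def by auto

lemma fin_sub5: "S \<subseteq> {1..5::nat} \<Longrightarrow> finite S" by (rule finite_subset) auto

lemma card_le5: "S \<subseteq> {1..5::nat} \<Longrightarrow> card S \<le> 5"
  using card_mono[of "{1..5::nat}" S] by simp

lemma bdiv5: "bdiv 5 S \<longleftrightarrow> S \<subseteq> {1..5} \<and> (card S = 2 \<or> card S = 3)"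
proof
  assume "bdiv 5 S"
  then show "S \<subseteq> {1..5} \<and> (card S = 2 \<or> card S = 3)"
    using card_cmpl[of S] card_le5[of S] by (auto simp: bdiv_def cmpl_def)
next
  assume "S \<subseteq> {1..5} \<and> (card S = 2 \<or> card S = 3)"
  then show "bdiv 5 S" using card_cmpl[of S] by (auto simp: bdiv_def cmpl_def)
qed

lemma bdiv_cmpl: "bdiv 5 S \<Longrightarrow> bdiv 5 (cmpl 5 S)"
  using card_cmpl[of S] cmpl_sub[of S] by (auto simp: bdiv5)

definition pr :: "nat set \<Rightarrow> nat set" where "pr S = (if card S = 2 then S else cmpl 5 S)"

lemma pr_props: "bdiv 5 S \<Longrightarrow> pr S \<subseteq> {1..5} \<and> card (pr S) = 2"
  using card_cmpl[of S] cmpl_sub[of S] by (auto simp: bdiv5 pr_def)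

lemma pr_cmpl: "bdiv 5 S \<Longrightarrow> pr (cmpl 5 S) = pr S"
  using card_cmpl[of S] cmpl_cmpl[of S] by (auto simp: bdiv5 pr_def)

lemma pair_sub: "card P = 2 \<Longrightarrow> \<exists>a b. P = {a, b} \<and> a \<noteq> b"
  by (metis card_2_iff)

definition phi :: "nat \<Rightarrow> 'k::comm_ring_1 A" where
  "phi i = (if i = 1 then A 0 0 1 (-1) 0 0 0 else if i = 2 then A 0 1 0 (-1) 0 0 0
    else if i = 3 then A 0 0 0 0 1 0 0 else if i = 4 then A 0 0 0 0 0 1 0 else A 0 0 0 (-1) 1 1 0)"

definition cc :: "'k::comm_ring_1 A" where "cc = A 0 0 0 1 (-1) (-1) 0"

definition val5 :: "nat set \<Rightarrow> 'k::comm_ring_1 A" where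
  "val5 S = (if bdiv 5 S then (\<Sum>x\<in>pr S. phi x) + cc else 0)"

lemma val5_pair: "a \<noteq> b \<Longrightarrow> a \<in> {1..5} \<Longrightarrow> b \<in> {1..5} \<Longrightarrow> val5 {a, b} = phi a + phi b + cc"
proof -
  assume ab: "a \<noteq> b" "a \<in> {1..5}" "b \<in> {1..5}"
  then have "bdiv 5 {a, b}" by (simp add: bdiv5)
  moreover have "pr {a, b} = {a, b}" using ab by (simp add: pr_def)
  ultimately show ?thesis using ab by (simp add: val5_def)
qed

lemma val5_cmpl: "bdiv 5 S \<Longrightarrow> val5 (cmpl 5 S) = val5 S"
  using bdiv_cmpl pr_cmpl by (simp add: val5_def)

lemma keel_set:
  assumes d: "distinct [i, j, k, l]" and s: "{i, j, k, l} \<subseteq> {1..5}"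
  shows "{S. bdiv 5 S \<and> i \<in> S \<and> j \<in> S \<and> k \<notin> S \<and> l \<notin> S} = {{i, j}, {1..5} - {k, l}}"
proof -
  let ?R = "{1..5::nat} - {k, l}"
  have cR: "card ?R = 3" using d s by (subst card_Diff_subset) auto
  have cij: "card {i, j} = 2" using d by simp
  show ?thesis
  proof (intro equalityI subsetI)
    fix S assume "S \<in> {S. bdiv 5 S \<and> i \<in> S \<and> j \<in> S \<and> k \<notin> S \<and> l \<notin> S}"
    then have b: "bdiv 5 S" and ij: "{i, j} \<subseteq> S" and SR: "S \<subseteq> ?R" by (auto simp: bdiv5)
    have fS: "finite S" using SR by (meson finite_Diff finite_atLeastAtMost finite_subset)
    from b have "card S = 2 \<or> card S = 3" by (simp add: bdiv5)
    then show "S \<in> {{i, j}, ?R}"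
    proof
      assume "card S = 2"
      then have "{i, j} = S" using card_subset_eq[OF fS ij] cij by simp
      then show ?thesis by simp
    next
      assume "card S = 3"
      then have "S = ?R" using card_subset_eq[OF _ SR] cR by simp
      then show ?thesis by simp
    qed
  next
    fix S assume "S \<in> {{i, j}, ?R}"
    then show "S \<in> {S. bdiv 5 S \<and> i \<in> S \<and> j \<in> S \<and> k \<notin> S \<and> l \<notin> S}"
      using d s cR cij by (auto simp: bdiv5)
  qed
qed

lemma keel_sum_eq:
  assumes d: "distinct [i, j, k, l]" and s: "{i, j, k, l} \<subseteq> {1..5}"
  shows "keel_sum 5 i j k l = var {i, j} + (var ({1..5} - {k, l}) :: 'k::comm_ring_1 kpoly)"
proof -
  have c1: "card ({1..5::nat} - {k, l}) = 3" using d s by (subst card_Diff_subset) auto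
  have c2: "card {i, j} = 2" using d by simp
  have ne: "{i, j} \<noteq> {1..5} - {k, l}"
  proof
    assume "{i, j} = {1..5} - {k, l}"
    then have "card {i, j} = card ({1..5::nat} - {k, l})" by (rule arg_cong)
    then show False using c1 c2 by simp
  qed
  show ?thesis unfolding keel_sum_def keel_set[OF d s] using ne by simp
qed

lemma cmpl_pair: "{k, l} \<subseteq> {1..5} \<Longrightarrow> cmpl 5 {k, l} = {1..5} - {k, l}" by (simp add: cmpl_def)

lemma val5_R: assumes d: "k \<noteq> l" and s: "{k, l} \<subseteq> {1..5}"
  shows "val5 ({1..5} - {k, l}) = phi k + phi l + cc"
proof -
  have b: "bdiv 5 {k, l}" using d s by (simp add: bdiv5)
  have "val5 ({1..5} - {k, l}) = val5 (cmpl 5 {k, l})" by (simp add: cmpl_def)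
  also have "\<dots> = val5 {k, l}" by (rule val5_cmpl[OF b])
  also have "\<dots> = phi k + phi l + cc" using d s by (intro val5_pair) auto
  finally show ?thesis .
qed

lemma sel_phi[simp]: "a0 (phi i) = 0" "a6 (phi i) = 0" by (simp_all add: phi_def)
lemma sel_cc[simp]: "a0 cc = 0" "a6 cc = 0" by (simp_all add: cc_def)

lemma in5: "(a::nat) \<in> {1..5} \<Longrightarrow> a = 1 \<or> a = 2 \<or> a = 3 \<or> a = 4 \<or> a = 5"
  by (simp add: atLeastAtMost_iff) presburger

lemma Bv_triple: "a \<in> {1..5} \<Longrightarrow> b \<in> {1..5} \<Longrightarrow> c \<in> {1..5} \<Longrightarrow> distinct [a, b, c] \<Longrightarrow>
   Bv (phi a + phi b + cc) (phi a + phi c + cc) = (0 :: 'k::comm_ring_1)"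
  apply (drule in5)+
  apply (elim disjE)
  apply (simp_all add: Bv_def phi_def cc_def)
  done

lemma incompat:
  assumes S: "bdiv 5 S" and T: "bdiv 5 T"
    and n: "\<not> (S \<subseteq> T \<or> T \<subseteq> S \<or> S \<subseteq> cmpl 5 T \<or> cmpl 5 T \<subseteq> S)"
  shows "pr S \<noteq> pr T \<and> pr S \<inter> pr T \<noteq> {}"
proof (rule ccontr)
  assume c: "\<not> (pr S \<noteq> pr T \<and> pr S \<inter> pr T \<noteq> {})"
  have S5: "S \<subseteq> {1..5}" and T5: "T \<subseteq> {1..5}" using S T by (auto simp: bdiv5)
  have ccS: "cmpl 5 (cmpl 5 S) = S" and ccT: "cmpl 5 (cmpl 5 T) = T" using S5 T5 by (simp_all add: cmpl_cmpl)
  have cm: "x \<in> cmpl 5 U \<longleftrightarrow> x \<in> {1..5} \<and> x \<notin> U" for x U by (simp add: cmpl_def)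
  consider "pr S = S" "pr T = T" | "pr S = S" "pr T = cmpl 5 T" | "pr S = cmpl 5 S" "pr T = T"
    | "pr S = cmpl 5 S" "pr T = cmpl 5 T"
  proof -
    have "pr S = S \<or> pr S = cmpl 5 S" "pr T = T \<or> pr T = cmpl 5 T" by (simp_all add: pr_def)
    then show thesis using that by blast
  qed
  then show False
  proof cases
    case 1
    then have "S = T \<or> S \<inter> T = {}" using c by auto
    then show False using n S5 cm by blast
  next
    case 2
    then have "S = cmpl 5 T \<or> S \<inter> cmpl 5 T = {}" using c by auto
    then show False using n S5 cm by blast
  next
    case 3
    then have "cmpl 5 S = T \<or> cmpl 5 S \<inter> T = {}" using c by auto
    then show False
    proof
      assume "cmpl 5 S = T" then have "cmpl 5 T = S" using ccS by simp
      then show False using n by simp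
    next
      assume "cmpl 5 S \<inter> T = {}" then show False using n T5 cm by blast
    qed
  next
    case 4
    then have "cmpl 5 S = cmpl 5 T \<or> cmpl 5 S \<inter> cmpl 5 T = {}" using c by auto
    then show False
    proof
      assume "cmpl 5 S = cmpl 5 T" then have "S = T" using ccS ccT by metis
      then show False using n by simp
    next
      assume "cmpl 5 S \<inter> cmpl 5 T = {}" then show False using n cm by blast
    qed
  qed
qed

lemma val5_prod_zero:
  assumes S: "bdiv 5 S" and T: "bdiv 5 T"
    and n: "\<not> (S \<subseteq> T \<or> T \<subseteq> S \<or> S \<subseteq> cmpl 5 T \<or> cmpl 5 T \<subseteq> S)"
  shows "val5 S * val5 T = (0::'k::comm_ring_1 A)"
proof -
  obtain a b where P: "pr S = {a, b}" "a \<noteq> b" using pr_props[OF S] pair_sub by blast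
  obtain c d where Q: "pr T = {c, d}" "c \<noteq> d" using pr_props[OF T] pair_sub by blast
  have s1: "{a, b} \<subseteq> {1..5}" "{c, d} \<subseteq> {1..5}" using pr_props[OF S] pr_props[OF T] P Q by auto
  have ne: "{a, b} \<noteq> {c, d}" "{a, b} \<inter> {c, d} \<noteq> {}" using incompat[OF S T n] P Q by auto
  have vS: "val5 S = phi a + phi b + (cc :: 'k A)" using S P s1 by (simp add: val5_def)
  have vT: "val5 T = phi c + phi d + (cc :: 'k A)" using T Q s1 by (simp add: val5_def)
  have "Bv (phi a + phi b + cc) (phi c + phi d + cc) = (0::'k)"
  proof -
    have "a = c \<and> b \<noteq> d \<or> a = d \<and> b \<noteq> c \<or> b = c \<and> a \<noteq> d \<or> b = d \<and> a \<noteq> c" using ne P Q by auto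
    then show ?thesis
    proof (elim disjE conjE)
      assume "a = c" "b \<noteq> d" then show ?thesis using Bv_triple[of a b d] s1 P Q by simp
    next
      assume "a = d" "b \<noteq> c" then show ?thesis using Bv_triple[of a b c] s1 P Q by (simp add: add.commute add.left_commute)
    next
      assume "b = c" "a \<noteq> d" then show ?thesis using Bv_triple[of b a d] s1 P Q by (simp add: add.commute add.left_commute)
    next
      assume "b = d" "a \<noteq> c" then show ?thesis using Bv_triple[of b a c] s1 P Q by (simp add: add.commute add.left_commute)
    qed
  qed
  then show ?thesis unfolding vS vT by (intro A_eqI) simp_all
qed

lemma evl_rels: "g \<in> keel_rels 5 \<Longrightarrow> evl val5 (g :: 'k::comm_ring_1 kpoly) = 0"
proof -
  assume g: "g \<in> keel_rels 5"
  have ks: "evl val5 (keel_sum 5 i j k l :: 'k kpoly) = phi i + phi j + phi k + phi l + cc + cc"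
    if d: "distinct [i, j, k, l]" and s: "{i, j, k, l} \<subseteq> {1..5}" for i j k l
    using keel_sum_eq[OF d s, where 'k='k] val5_pair[of i j, where 'a='k] val5_R[of k l, where 'a='k] d s by (simp add: evl_add)
  have dist: "card {i, j, k, l} = 4 \<Longrightarrow> distinct [i, j, k, l]" for i j k l :: nat
  proof -
    assume c: "card {i, j, k, l} = 4"
    have "card {i,j,k,l} = length [i,j,k,l]" using c by simp
    then show ?thesis using card_distinct[of "[i,j,k,l]"] by simp
  qed
  have d2: "distinct [i, j, k, l] \<Longrightarrow> distinct [i, k, j, l]" "distinct [i, j, k, l] \<Longrightarrow> distinct [i, l, j, k]" for i j k l :: nat
    by auto
  from g show ?thesis unfolding keel_rels_def
  proof (elim UnE CollectE exE conjE)
    fix S assume "g = var S" "\<not> bdiv 5 S" then show ?thesis by (simp add: val5_def)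
  next
    fix S assume "g = var S - var (cmpl 5 S)" "bdiv 5 S" then show ?thesis by (simp add: evl_diff val5_cmpl)
  next
    fix i j k l assume e: "g = keel_sum 5 i j k l - keel_sum 5 i k j l" "{i, j, k, l} \<subseteq> {1..5}" "card {i, j, k, l} = 4"
    then have d: "distinct [i, j, k, l]" by (intro dist)
    have s': "{i, k, j, l} \<subseteq> {1..5}" using e by auto
    have e1: "evl val5 g = evl val5 (keel_sum 5 i j k l :: 'k kpoly) - evl val5 (keel_sum 5 i k j l :: 'k kpoly)"
      unfolding e(1) by (rule evl_diff)
    show ?thesis unfolding e1 ks[OF d e(2)] ks[OF d2(1)[OF d] s'] by (simp add: algebra_simps)
  next
    fix i j k l assume e: "g = keel_sum 5 i j k l - keel_sum 5 i l j k" "{i, j, k, l} \<subseteq> {1..5}" "card {i, j, k, l} = 4"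
    then have d: "distinct [i, j, k, l]" by (intro dist)
    have s': "{i, l, j, k} \<subseteq> {1..5}" using e by auto
    have e1: "evl val5 g = evl val5 (keel_sum 5 i j k l :: 'k kpoly) - evl val5 (keel_sum 5 i l j k :: 'k kpoly)"
      unfolding e(1) by (rule evl_diff)
    show ?thesis unfolding e1 ks[OF d e(2)] ks[OF d2(2)[OF d] s'] by (simp add: algebra_simps)
  next
    fix S T assume "g = var S * var T" "bdiv 5 S" "bdiv 5 T"
      "\<not> (S \<subseteq> T \<or> T \<subseteq> S \<or> S \<subseteq> cmpl 5 T \<or> cmpl 5 T \<subseteq> S)"
    then show ?thesis using val5_prod_zero by (simp add: evl_mult)
  qed
qed

lemma evl_I: "x \<in> keel_ideal 5 \<Longrightarrow> evl val5 (x :: 'k::comm_ring_1 kpoly) = 0"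
  unfolding keel_ideal_def by (erule evl_ideal) (rule evl_rels)




abbreviation I5 :: "'k::comm_ring_1 kpoly set" where "I5 \<equiv> keel_ideal 5"

lemma I_gen: "g \<in> keel_rels 5 \<Longrightarrow> g \<in> I5" unfolding keel_ideal_def by (rule ideal_gen.base)
lemma I_add: "a \<in> I5 \<Longrightarrow> b \<in> I5 \<Longrightarrow> a + b \<in> I5" unfolding keel_ideal_def by (rule ideal_gen.add)
lemma I_multL: "a \<in> I5 \<Longrightarrow> r * a \<in> I5" unfolding keel_ideal_def by (rule ideal_gen.mult)
lemma I_multR: "a \<in> I5 \<Longrightarrow> a * r \<in> I5" using I_multL[of a r] by (simp add: mult.commute)
lemma I_zero: "0 \<in> I5" unfolding keel_ideal_def by (rule ideal_gen.zero)
lemma I_uminus: "a \<in> I5 \<Longrightarrow> - a \<in> I5" using I_multL[of a "-1"] by simp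
lemma I_diff: "a \<in> I5 \<Longrightarrow> b \<in> I5 \<Longrightarrow> a - b \<in> I5" using I_add[OF _ I_uminus] by (simp)
lemma I_sum: "finite S \<Longrightarrow> (\<And>i. i \<in> S \<Longrightarrow> f i \<in> I5) \<Longrightarrow> sum f S \<in> I5"
  by (induction S rule: finite_induct) (auto intro: I_add I_zero)

lemma A_of_nat: "(of_nat m :: 'k::comm_ring_1 A) = A (of_nat m) 0 0 0 0 0 0"
  by (induction m) (auto intro!: A_eqI)

lemma A_numeral: "(numeral n :: 'k::comm_ring_1 A) = A (numeral n) 0 0 0 0 0 0"
  using A_of_nat[of "numeral n", where 'k='k] by simp

lemma A_num_sel[simp]: "a0 (numeral n :: 'k::comm_ring_1 A) = numeral n" "a1 (numeral n :: 'k A) = 0"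
  "a2 (numeral n :: 'k A) = 0" "a3 (numeral n :: 'k A) = 0" "a4 (numeral n :: 'k A) = 0"
  "a5 (numeral n :: 'k A) = 0" "a6 (numeral n :: 'k A) = 0"
  "Bv (numeral n :: 'k A) x = 0" "Bv x (numeral n :: 'k A) = 0"
  by (simp_all add: A_numeral Bv_def)

definition Xv :: "nat \<Rightarrow> nat \<Rightarrow> 'k::comm_ring_1 kpoly" where "Xv i j = var {i, j}"

lemma Q0mem: assumes "a \<noteq> b" "c \<noteq> d" "{a, b, c, d} \<subseteq> {1..5}" "{a, b} \<noteq> {c, d}" "{a, b} \<inter> {c, d} \<noteq> {}"
  shows "Xv a b * Xv c d \<in> I5"
proof -
  let ?P = "{a, b}" and ?Q = "{c, d}"
  have bP: "bdiv 5 ?P" and bQ: "bdiv 5 ?Q" using assms by (auto simp: bdiv5)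
  have cP: "card ?P = 2" and cQ: "card ?Q = 2" using assms by auto
  have n: "\<not> (?P \<subseteq> ?Q \<or> ?Q \<subseteq> ?P \<or> ?P \<subseteq> cmpl 5 ?Q \<or> cmpl 5 ?Q \<subseteq> ?P)"
  proof
    assume "?P \<subseteq> ?Q \<or> ?Q \<subseteq> ?P \<or> ?P \<subseteq> cmpl 5 ?Q \<or> cmpl 5 ?Q \<subseteq> ?P"
    then show False
    proof (elim disjE)
      assume "?P \<subseteq> ?Q" then have "?P = ?Q" using card_subset_eq[of ?Q ?P] cP cQ by simp
      then show False using assms by simp
    next
      assume "?Q \<subseteq> ?P" then have "?Q = ?P" using card_subset_eq[of ?P ?Q] cP cQ by simp
      then show False using assms by simp
    next
      assume "?P \<subseteq> cmpl 5 ?Q" then show False using assms by (auto simp: cmpl_def)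
    next
      assume h: "cmpl 5 ?Q \<subseteq> ?P"
      have "card (cmpl 5 ?Q) = 3" using card_cmpl[of ?Q] assms cQ by simp
      moreover have "card (cmpl 5 ?Q) \<le> card ?P" by (rule card_mono) (use h in auto)
      ultimately show False using cP by simp
    qed
  qed
  have "var ?P * var ?Q \<in> {var S * var T | S T. bdiv 5 S \<and> bdiv 5 T \<and>
        \<not> (S \<subseteq> T \<or> T \<subseteq> S \<or> S \<subseteq> cmpl 5 T \<or> cmpl 5 T \<subseteq> S)}"
    using bP bQ n by blast
  then have "var ?P * var ?Q \<in> keel_rels 5" unfolding keel_rels_def by (rule UnI2)
  then show ?thesis unfolding Xv_def by (rule I_gen)
qed

lemma LRmem: assumes d: "distinct [i, j, k, l]" and s: "{i, j, k, l} \<subseteq> {1..5}"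
  shows "Xv i j + Xv k l - Xv i k - Xv j l \<in> I5"
proof -
  have d': "distinct [i, k, j, l]" using d by auto
  have s': "{i, k, j, l} \<subseteq> {1..5}" using s by auto
  have c4: "card {i, j, k, l} = 4" using d by simp
  have g0: "keel_sum 5 i j k l - keel_sum 5 i k j l \<in> {keel_sum 5 i j k l - keel_sum 5 i k j l | i j k l.
        {i,j,k,l} \<subseteq> {1..5} \<and> card {i,j,k,l} = 4}"
    using s c4 by blast
  have g: "keel_sum 5 i j k l - keel_sum 5 i k j l \<in> I5"
    by (rule I_gen) (unfold keel_rels_def, rule UnI1, rule UnI1, rule UnI2, rule g0)
  have r: "var {a, b} - var ({1..5} - {a, b}) \<in> I5" if "a \<noteq> b" "{a, b} \<subseteq> {1..5}" for a b
  proof (rule I_gen)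
    have "bdiv 5 {a, b}" using that by (simp add: bdiv5)
    then have "var {a, b} - var ({1..5} - {a, b}) \<in> {var S - var (cmpl 5 S) | S. bdiv 5 S}"
      unfolding cmpl_def by blast
    then show "var {a, b} - var ({1..5} - {a, b}) \<in> keel_rels 5"
      unfolding keel_rels_def by (rule UnI1[OF UnI1[OF UnI1[OF UnI2]]])
  qed
  have e: "Xv i j + Xv k l - Xv i k - Xv j l = (keel_sum 5 i j k l - keel_sum 5 i k j l)
     + (var {k, l} - var ({1..5} - {k, l})) - (var {j, l} - var ({1..5} - {j, l}))"
    unfolding keel_sum_eq[OF d s] keel_sum_eq[OF d' s'] Xv_def by (simp add: algebra_simps)
  show ?thesis unfolding e
    by (rule I_diff[OF I_add[OF g r] r]) (use d s in auto)
qed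

definition L :: "nat \<Rightarrow> 'k::comm_ring_1 kpoly" where
  "L x = (if x = 0 then Xv 3 4 + Xv 2 5 else if x = 1 then Xv 3 4 + Xv 1 5 else if x = 2 then Xv 3 4
     else if x = 3 then Xv 3 5 else Xv 4 5)"

definition Ls :: "'k::comm_ring_1 kpoly" where "Ls = Xv 3 4 * Xv 1 5"

definition Lv :: "'k::comm_ring_1 A \<Rightarrow> 'k kpoly" where "Lv a = (\<Sum>x<5. Cst (vc x a) * L x)"

definition lift :: "'k::comm_ring_1 A \<Rightarrow> 'k kpoly" where
  "lift a = Cst (a0 a) + Lv a + Cst (a6 a) * Ls"

definition sA :: "'k::comm_ring_1 A" where "sA = A 0 0 0 0 0 0 1"

lemma evl_Xv: "a \<noteq> b \<Longrightarrow> a \<in> {1..5} \<Longrightarrow> b \<in> {1..5} \<Longrightarrow> evl val5 (Xv a b) = phi a + phi b + cc"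
  unfolding Xv_def by (simp add: val5_pair)

lemma evl_L: "x < 5 \<Longrightarrow> evl val5 (L x) = (ev x :: 'k::comm_ring_1 A)"
  apply (drule lt5)
  apply (elim disjE)
      apply (simp_all add: L_def evl_add evl_Xv)
     apply (rule A_eqI; simp add: phi_def cc_def ev_def)+
  done

lemma evl_Ls: "evl val5 Ls = (sA :: 'k::comm_ring_1 A)"
  unfolding Ls_def evl_mult by (simp add: evl_Xv) (rule A_eqI; simp add: phi_def cc_def sA_def Bv_def)

lemma A_decomp: "a = of_k (a0 a) + (\<Sum>x<5. of_k (vc x a) * ev x) + of_k (a6 a) * (sA :: 'k::comm_ring_1 A)"
  by (rule A_eqI) (simp_all add: sum5 vc_def ev_def sA_def)

lemma evl_lift: "evl val5 (lift a) = (a :: 'k::comm_ring_1 A)"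
proof -
  have "evl val5 (Lv a) = (\<Sum>x<5. of_k (vc x a) * (ev x :: 'k A))"
    unfolding Lv_def evl_sum by (rule sum.cong) (simp_all add: evl_mult evl_L)
  then show ?thesis unfolding lift_def using A_decomp[of a, symmetric]
    by (simp add: evl_add evl_mult evl_Ls)
qed

lemma vc_mult: "vc x (a * b) = a0 a * vc x b + vc x a * a0 b"
  by (simp add: vc_def)

lemma Lv_lin: "Lv (a + b) = Lv a + Lv b" "Lv (of_k c * a) = Cst c * Lv a" "Lv 0 = 0"
  "Lv (a * b) = Cst (a0 a) * Lv b + Cst (a0 b) * Lv a"
proof -
  show "Lv (a + b) = Lv a + Lv b" unfolding Lv_def by (simp add: Cst_simps distrib_right sum.distrib)
  show "Lv (of_k c * a) = Cst c * Lv a" unfolding Lv_def by (simp add: Cst_simps sum_distrib_left mult.assoc)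
  show "Lv 0 = 0" unfolding Lv_def by (simp add: Cst_simps)
  have "Lv (a * b) = (\<Sum>x<5. Cst (a0 a) * (Cst (vc x b) * L x) + Cst (a0 b) * (Cst (vc x a) * L x))"
    unfolding Lv_def vc_mult by (rule sum.cong) (simp_all add: Cst_simps algebra_simps)
  then show "Lv (a * b) = Cst (a0 a) * Lv b + Cst (a0 b) * Lv a"
    by (simp add: Lv_def sum.distrib sum_distrib_left)
qed




lemma Xv_sym: "Xv i j = Xv j i" by (simp add: Xv_def insert_commute)

lemma lr_1_3_5_4: "Xv 1 3 + Xv 4 5 - Xv 1 5 - Xv 3 4 \<in> I5"
  using LRmem[of 1 3 5 4] by (simp add: Xv_sym)

lemma q0_13_34: "Xv 1 3 * Xv 3 4 \<in> I5"
  by (rule Q0mem) (auto simp: doubleton_eq_iff)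

lemma q0_34_45: "Xv 3 4 * Xv 4 5 \<in> I5"
  by (rule Q0mem) (auto simp: doubleton_eq_iff)

lemma B_34_34: "Xv 3 4 * Xv 3 4 + Ls \<in> I5"
proof -
  have "Xv 3 4 * Xv 3 4 + Ls = ((-1) * (Xv 3 4)) * (Xv 1 3 + Xv 4 5 - Xv 1 5 - Xv 3 4) + (1 * (Xv 1 3 * Xv 3 4) + (1 * (Xv 3 4 * Xv 4 5)))"
    by (simp add: Ls_def algebra_simps)
  also have "\<dots> \<in> I5" by (rule I_add[OF I_multL[OF lr_1_3_5_4] I_add[OF I_multL[OF q0_13_34] I_multL[OF q0_34_45]]])
  finally show ?thesis .
qed

lemma lr_1_3_5_2: "Xv 1 3 + Xv 2 5 - Xv 1 5 - Xv 2 3 \<in> I5"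
  using LRmem[of 1 3 5 2] by (simp add: Xv_sym)

lemma q0_23_34: "Xv 2 3 * Xv 3 4 \<in> I5"
  by (rule Q0mem) (auto simp: doubleton_eq_iff)

lemma B_34_25: "Xv 3 4 * Xv 2 5 - Ls \<in> I5"
proof -
  have "Xv 3 4 * Xv 2 5 - Ls = (1 * (Xv 3 4)) * (Xv 1 3 + Xv 2 5 - Xv 1 5 - Xv 2 3) + ((-1) * (Xv 1 3 * Xv 3 4) + (1 * (Xv 2 3 * Xv 3 4)))"
    by (simp add: Ls_def algebra_simps)
  also have "\<dots> \<in> I5" by (rule I_add[OF I_multL[OF lr_1_3_5_2] I_add[OF I_multL[OF q0_13_34] I_multL[OF q0_23_34]]])
  finally show ?thesis .
qed

lemma B_34_15: "Xv 3 4 * Xv 1 5 - Ls \<in> I5"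
  by (simp add: Ls_def I_zero mult.commute)

lemma q0_34_35: "Xv 3 4 * Xv 3 5 \<in> I5"
  by (rule Q0mem) (auto simp: doubleton_eq_iff)

lemma B_34_35: "Xv 3 4 * Xv 3 5 \<in> I5"
proof -
  have "Xv 3 4 * Xv 3 5 = 1 * (Xv 3 4 * Xv 3 5)"
    by (simp add: Ls_def algebra_simps)
  also have "\<dots> \<in> I5" by (rule I_multL[OF q0_34_35])
  finally show ?thesis .
qed

lemma B_34_45: "Xv 3 4 * Xv 4 5 \<in> I5"
proof -
  have "Xv 3 4 * Xv 4 5 = 1 * (Xv 3 4 * Xv 4 5)"
    by (simp add: Ls_def algebra_simps)
  also have "\<dots> \<in> I5" by (rule I_multL[OF q0_34_45])
  finally show ?thesis .
qed

lemma lr_2_3_5_4: "Xv 2 3 + Xv 4 5 - Xv 2 5 - Xv 3 4 \<in> I5"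
  using LRmem[of 2 3 5 4] by (simp add: Xv_sym)

lemma q0_23_25: "Xv 2 3 * Xv 2 5 \<in> I5"
  by (rule Q0mem) (auto simp: doubleton_eq_iff)

lemma q0_25_45: "Xv 2 5 * Xv 4 5 \<in> I5"
  by (rule Q0mem) (auto simp: doubleton_eq_iff)

lemma B_25_25: "Xv 2 5 * Xv 2 5 + Ls \<in> I5"
proof -
  have "Xv 2 5 * Xv 2 5 + Ls = ((-1) * (Xv 2 5)) * (Xv 2 3 + Xv 4 5 - Xv 2 5 - Xv 3 4) + (((-1) * (Xv 3 4)) * (Xv 1 3 + Xv 2 5 - Xv 1 5 - Xv 2 3) + (1 * (Xv 1 3 * Xv 3 4) + (1 * (Xv 2 3 * Xv 2 5) + ((-1) * (Xv 2 3 * Xv 3 4) + (1 * (Xv 2 5 * Xv 4 5))))))"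
    by (simp add: Ls_def algebra_simps)
  also have "\<dots> \<in> I5" by (rule I_add[OF I_multL[OF lr_2_3_5_4] I_add[OF I_multL[OF lr_1_3_5_2] I_add[OF I_multL[OF q0_13_34] I_add[OF I_multL[OF q0_23_25] I_add[OF I_multL[OF q0_23_34] I_multL[OF q0_25_45]]]]]])
  finally show ?thesis .
qed

lemma q0_15_25: "Xv 1 5 * Xv 2 5 \<in> I5"
  by (rule Q0mem) (auto simp: doubleton_eq_iff)

lemma B_25_15: "Xv 2 5 * Xv 1 5 \<in> I5"
proof -
  have "Xv 2 5 * Xv 1 5 = 1 * (Xv 1 5 * Xv 2 5)"
    by (simp add: Ls_def algebra_simps)
  also have "\<dots> \<in> I5" by (rule I_multL[OF q0_15_25])
  finally show ?thesis .
qed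

lemma q0_25_35: "Xv 2 5 * Xv 3 5 \<in> I5"
  by (rule Q0mem) (auto simp: doubleton_eq_iff)

lemma B_25_35: "Xv 2 5 * Xv 3 5 \<in> I5"
proof -
  have "Xv 2 5 * Xv 3 5 = 1 * (Xv 2 5 * Xv 3 5)"
    by (simp add: Ls_def algebra_simps)
  also have "\<dots> \<in> I5" by (rule I_multL[OF q0_25_35])
  finally show ?thesis .
qed

lemma B_25_45: "Xv 2 5 * Xv 4 5 \<in> I5"
proof -
  have "Xv 2 5 * Xv 4 5 = 1 * (Xv 2 5 * Xv 4 5)"
    by (simp add: Ls_def algebra_simps)
  also have "\<dots> \<in> I5" by (rule I_multL[OF q0_25_45])
  finally show ?thesis .
qed

lemma q0_13_15: "Xv 1 3 * Xv 1 5 \<in> I5"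
  by (rule Q0mem) (auto simp: doubleton_eq_iff)

lemma q0_15_45: "Xv 1 5 * Xv 4 5 \<in> I5"
  by (rule Q0mem) (auto simp: doubleton_eq_iff)

lemma B_15_15: "Xv 1 5 * Xv 1 5 + Ls \<in> I5"
proof -
  have "Xv 1 5 * Xv 1 5 + Ls = ((-1) * (Xv 1 5)) * (Xv 1 3 + Xv 4 5 - Xv 1 5 - Xv 3 4) + (1 * (Xv 1 3 * Xv 1 5) + (1 * (Xv 1 5 * Xv 4 5)))"
    by (simp add: Ls_def algebra_simps)
  also have "\<dots> \<in> I5" by (rule I_add[OF I_multL[OF lr_1_3_5_4] I_add[OF I_multL[OF q0_13_15] I_multL[OF q0_15_45]]])
  finally show ?thesis .
qed

lemma q0_15_35: "Xv 1 5 * Xv 3 5 \<in> I5"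
  by (rule Q0mem) (auto simp: doubleton_eq_iff)

lemma B_15_35: "Xv 1 5 * Xv 3 5 \<in> I5"
proof -
  have "Xv 1 5 * Xv 3 5 = 1 * (Xv 1 5 * Xv 3 5)"
    by (simp add: Ls_def algebra_simps)
  also have "\<dots> \<in> I5" by (rule I_multL[OF q0_15_35])
  finally show ?thesis .
qed

lemma B_15_45: "Xv 1 5 * Xv 4 5 \<in> I5"
proof -
  have "Xv 1 5 * Xv 4 5 = 1 * (Xv 1 5 * Xv 4 5)"
    by (simp add: Ls_def algebra_simps)
  also have "\<dots> \<in> I5" by (rule I_multL[OF q0_15_45])
  finally show ?thesis .
qed

lemma lr_1_4_5_3: "Xv 1 4 + Xv 3 5 - Xv 1 5 - Xv 3 4 \<in> I5"
  using LRmem[of 1 4 5 3] by (simp add: Xv_sym)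

lemma lr_1_2_5_3: "Xv 1 2 + Xv 3 5 - Xv 1 5 - Xv 2 3 \<in> I5"
  using LRmem[of 1 2 5 3] by (simp add: Xv_sym)

lemma lr_1_2_3_5: "Xv 1 2 + Xv 3 5 - Xv 1 3 - Xv 2 5 \<in> I5"
  using LRmem[of 1 2 3 5] by (simp add: Xv_sym)

lemma q0_12_14: "Xv 1 2 * Xv 1 4 \<in> I5"
  by (rule Q0mem) (auto simp: doubleton_eq_iff)

lemma q0_12_15: "Xv 1 2 * Xv 1 5 \<in> I5"
  by (rule Q0mem) (auto simp: doubleton_eq_iff)

lemma q0_13_35: "Xv 1 3 * Xv 3 5 \<in> I5"
  by (rule Q0mem) (auto simp: doubleton_eq_iff)

lemma B_35_35: "Xv 3 5 * Xv 3 5 + Ls \<in> I5"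
proof -
  have "Xv 3 5 * Xv 3 5 + Ls = ((-1) * (Xv 1 2)) * (Xv 1 4 + Xv 3 5 - Xv 1 5 - Xv 3 4) + (((-1) * (Xv 3 4)) * (Xv 1 2 + Xv 3 5 - Xv 1 5 - Xv 2 3) + ((1 * (Xv 3 5)) * (Xv 1 2 + Xv 3 5 - Xv 1 3 - Xv 2 5) + (1 * (Xv 1 2 * Xv 1 4) + ((-1) * (Xv 1 2 * Xv 1 5) + (1 * (Xv 1 3 * Xv 3 5) + ((-1) * (Xv 2 3 * Xv 3 4) + (1 * (Xv 2 5 * Xv 3 5) + (1 * (Xv 3 4 * Xv 3 5)))))))))"
    by (simp add: Ls_def algebra_simps)
  also have "\<dots> \<in> I5" by (rule I_add[OF I_multL[OF lr_1_4_5_3] I_add[OF I_multL[OF lr_1_2_5_3] I_add[OF I_multL[OF lr_1_2_3_5] I_add[OF I_multL[OF q0_12_14] I_add[OF I_multL[OF q0_12_15] I_add[OF I_multL[OF q0_13_35] I_add[OF I_multL[OF q0_23_34] I_add[OF I_multL[OF q0_25_35] I_multL[OF q0_34_35]]]]]]]]])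
  finally show ?thesis .
qed

lemma q0_35_45: "Xv 3 5 * Xv 4 5 \<in> I5"
  by (rule Q0mem) (auto simp: doubleton_eq_iff)

lemma B_35_45: "Xv 3 5 * Xv 4 5 \<in> I5"
proof -
  have "Xv 3 5 * Xv 4 5 = 1 * (Xv 3 5 * Xv 4 5)"
    by (simp add: Ls_def algebra_simps)
  also have "\<dots> \<in> I5" by (rule I_multL[OF q0_35_45])
  finally show ?thesis .
qed

lemma lr_1_2_4_5: "Xv 1 2 + Xv 4 5 - Xv 1 4 - Xv 2 5 \<in> I5"
  using LRmem[of 1 2 4 5] by (simp add: Xv_sym)

lemma q0_12_13: "Xv 1 2 * Xv 1 3 \<in> I5"
  by (rule Q0mem) (auto simp: doubleton_eq_iff)

lemma q0_14_45: "Xv 1 4 * Xv 4 5 \<in> I5"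
  by (rule Q0mem) (auto simp: doubleton_eq_iff)

lemma B_45_45: "Xv 4 5 * Xv 4 5 + Ls \<in> I5"
proof -
  have "Xv 4 5 * Xv 4 5 + Ls = ((-1) * (Xv 1 2)) * (Xv 1 3 + Xv 4 5 - Xv 1 5 - Xv 3 4) + (((-1) * (Xv 3 4)) * (Xv 1 2 + Xv 3 5 - Xv 1 5 - Xv 2 3) + ((1 * (Xv 4 5)) * (Xv 1 2 + Xv 4 5 - Xv 1 4 - Xv 2 5) + (1 * (Xv 1 2 * Xv 1 3) + ((-1) * (Xv 1 2 * Xv 1 5) + (1 * (Xv 1 4 * Xv 4 5) + ((-1) * (Xv 2 3 * Xv 3 4) + (1 * (Xv 2 5 * Xv 4 5) + (1 * (Xv 3 4 * Xv 3 5)))))))))"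
    by (simp add: Ls_def algebra_simps)
  also have "\<dots> \<in> I5" by (rule I_add[OF I_multL[OF lr_1_3_5_4] I_add[OF I_multL[OF lr_1_2_5_3] I_add[OF I_multL[OF lr_1_2_4_5] I_add[OF I_multL[OF q0_12_13] I_add[OF I_multL[OF q0_12_15] I_add[OF I_multL[OF q0_14_45] I_add[OF I_multL[OF q0_23_34] I_add[OF I_multL[OF q0_25_45] I_multL[OF q0_34_35]]]]]]]]])
  finally show ?thesis .
qed

lemma lr_1_2_3_4: "Xv 1 2 + Xv 3 4 - Xv 1 3 - Xv 2 4 \<in> I5"
  using LRmem[of 1 2 3 4] by (simp add: Xv_sym)

lemma q0_24_34: "Xv 2 4 * Xv 3 4 \<in> I5"
  by (rule Q0mem) (auto simp: doubleton_eq_iff)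

lemma D_34: "Xv 3 4 * Ls \<in> I5"
proof -
  have "Xv 3 4 * Ls = (1 * (Xv 1 5 * Xv 3 4)) * (Xv 1 2 + Xv 3 4 - Xv 1 3 - Xv 2 4) + ((Xv 1 2 * Xv 1 5) * (- (Xv 3 4)) + ((Xv 1 3 * Xv 1 5) * (Xv 3 4) + ((Xv 2 4 * Xv 3 4) * (Xv 1 5))))"
    by (simp add: Ls_def algebra_simps)
  also have "\<dots> \<in> I5" by (rule I_add[OF I_multL[OF lr_1_2_3_4] I_add[OF I_multR[OF q0_12_15] I_add[OF I_multR[OF q0_13_15] I_multR[OF q0_24_34]]]])
  finally show ?thesis .
qed

lemma D_25: "Xv 2 5 * Ls \<in> I5"
proof -
  have "Xv 2 5 * Ls = (Xv 1 5 * Xv 2 5) * (Xv 3 4)"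
    by (simp add: Ls_def algebra_simps)
  also have "\<dots> \<in> I5" by (rule I_multR[OF q0_15_25])
  finally show ?thesis .
qed

lemma D_15: "Xv 1 5 * Ls \<in> I5"
proof -
  have "Xv 1 5 * Ls = ((-1) * (Xv 1 5 * Xv 3 4)) * (Xv 1 2 + Xv 3 5 - Xv 1 5 - Xv 2 3) + ((Xv 1 2 * Xv 1 5) * (Xv 3 4) + ((Xv 2 3 * Xv 3 4) * (- (Xv 1 5)) + ((Xv 1 5 * Xv 3 5) * (Xv 3 4))))"
    by (simp add: Ls_def algebra_simps)
  also have "\<dots> \<in> I5" by (rule I_add[OF I_multL[OF lr_1_2_5_3] I_add[OF I_multR[OF q0_12_15] I_add[OF I_multR[OF q0_23_34] I_multR[OF q0_15_35]]]])
  finally show ?thesis .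
qed

lemma D_35: "Xv 3 5 * Ls \<in> I5"
proof -
  have "Xv 3 5 * Ls = (Xv 1 5 * Xv 3 5) * (Xv 3 4)"
    by (simp add: Ls_def algebra_simps)
  also have "\<dots> \<in> I5" by (rule I_multR[OF q0_15_35])
  finally show ?thesis .
qed

lemma D_45: "Xv 4 5 * Ls \<in> I5"
proof -
  have "Xv 4 5 * Ls = (Xv 1 5 * Xv 4 5) * (Xv 3 4)"
    by (simp add: Ls_def algebra_simps)
  also have "\<dots> \<in> I5" by (rule I_multR[OF q0_15_45])
  finally show ?thesis .
qed

lemma F1_0_0: "L 0 * L 0 - Cst (bet 0 0) * Ls \<in> I5"
proof -
  have "L 0 * L 0 - Cst (bet 0 0) * Ls = 1 * (Xv 2 5 * Xv 2 5 + Ls) + (2 * (Xv 3 4 * Xv 2 5 - Ls) + (1 * (Xv 3 4 * Xv 3 4 + Ls)))"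
    by (simp add: L_def bet.simps Cst_simps algebra_simps)
  also have "\<dots> \<in> I5" by (rule I_add[OF I_multL[OF B_25_25] I_add[OF I_multL[OF B_34_25] I_multL[OF B_34_34]]])
  finally show ?thesis .
qed

lemma F1_0_1: "L 0 * L 1 - Cst (bet 0 1) * Ls \<in> I5"
proof -
  have "L 0 * L 1 - Cst (bet 0 1) * Ls = 1 * (Xv 2 5 * Xv 1 5) + (1 * (Xv 3 4 * Xv 1 5 - Ls) + (1 * (Xv 3 4 * Xv 2 5 - Ls) + (1 * (Xv 3 4 * Xv 3 4 + Ls))))"
    by (simp add: L_def bet.simps Cst_simps algebra_simps)
  also have "\<dots> \<in> I5" by (rule I_add[OF I_multL[OF B_25_15] I_add[OF I_multL[OF B_34_15] I_add[OF I_multL[OF B_34_25] I_multL[OF B_34_34]]]])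
  finally show ?thesis .
qed

lemma F1_0_2: "L 0 * L 2 - Cst (bet 0 2) * Ls \<in> I5"
proof -
  have "L 0 * L 2 - Cst (bet 0 2) * Ls = 1 * (Xv 3 4 * Xv 2 5 - Ls) + (1 * (Xv 3 4 * Xv 3 4 + Ls))"
    by (simp add: L_def bet.simps Cst_simps algebra_simps)
  also have "\<dots> \<in> I5" by (rule I_add[OF I_multL[OF B_34_25] I_multL[OF B_34_34]])
  finally show ?thesis .
qed

lemma F1_0_3: "L 0 * L 3 - Cst (bet 0 3) * Ls \<in> I5"
proof -
  have "L 0 * L 3 - Cst (bet 0 3) * Ls = 1 * (Xv 2 5 * Xv 3 5) + (1 * (Xv 3 4 * Xv 3 5))"
    by (simp add: L_def bet.simps Cst_simps algebra_simps)
  also have "\<dots> \<in> I5" by (rule I_add[OF I_multL[OF B_25_35] I_multL[OF B_34_35]])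
  finally show ?thesis .
qed

lemma F1_0_4: "L 0 * L 4 - Cst (bet 0 4) * Ls \<in> I5"
proof -
  have "L 0 * L 4 - Cst (bet 0 4) * Ls = 1 * (Xv 2 5 * Xv 4 5) + (1 * (Xv 3 4 * Xv 4 5))"
    by (simp add: L_def bet.simps Cst_simps algebra_simps)
  also have "\<dots> \<in> I5" by (rule I_add[OF I_multL[OF B_25_45] I_multL[OF B_34_45]])
  finally show ?thesis .
qed

lemma F1_1_0: "L 1 * L 0 - Cst (bet 1 0) * Ls \<in> I5"
proof -
  have "L 1 * L 0 - Cst (bet 1 0) * Ls = 1 * (Xv 2 5 * Xv 1 5) + (1 * (Xv 3 4 * Xv 1 5 - Ls) + (1 * (Xv 3 4 * Xv 2 5 - Ls) + (1 * (Xv 3 4 * Xv 3 4 + Ls))))"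
    by (simp add: L_def bet.simps Cst_simps algebra_simps)
  also have "\<dots> \<in> I5" by (rule I_add[OF I_multL[OF B_25_15] I_add[OF I_multL[OF B_34_15] I_add[OF I_multL[OF B_34_25] I_multL[OF B_34_34]]]])
  finally show ?thesis .
qed

lemma F1_1_1: "L 1 * L 1 - Cst (bet 1 1) * Ls \<in> I5"
proof -
  have "L 1 * L 1 - Cst (bet 1 1) * Ls = 1 * (Xv 1 5 * Xv 1 5 + Ls) + (2 * (Xv 3 4 * Xv 1 5 - Ls) + (1 * (Xv 3 4 * Xv 3 4 + Ls)))"
    by (simp add: L_def bet.simps Cst_simps algebra_simps)
  also have "\<dots> \<in> I5" by (rule I_add[OF I_multL[OF B_15_15] I_add[OF I_multL[OF B_34_15] I_multL[OF B_34_34]]])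
  finally show ?thesis .
qed

lemma F1_1_2: "L 1 * L 2 - Cst (bet 1 2) * Ls \<in> I5"
proof -
  have "L 1 * L 2 - Cst (bet 1 2) * Ls = 1 * (Xv 3 4 * Xv 1 5 - Ls) + (1 * (Xv 3 4 * Xv 3 4 + Ls))"
    by (simp add: L_def bet.simps Cst_simps algebra_simps)
  also have "\<dots> \<in> I5" by (rule I_add[OF I_multL[OF B_34_15] I_multL[OF B_34_34]])
  finally show ?thesis .
qed

lemma F1_1_3: "L 1 * L 3 - Cst (bet 1 3) * Ls \<in> I5"
proof -
  have "L 1 * L 3 - Cst (bet 1 3) * Ls = 1 * (Xv 1 5 * Xv 3 5) + (1 * (Xv 3 4 * Xv 3 5))"
    by (simp add: L_def bet.simps Cst_simps algebra_simps)
  also have "\<dots> \<in> I5" by (rule I_add[OF I_multL[OF B_15_35] I_multL[OF B_34_35]])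
  finally show ?thesis .
qed

lemma F1_1_4: "L 1 * L 4 - Cst (bet 1 4) * Ls \<in> I5"
proof -
  have "L 1 * L 4 - Cst (bet 1 4) * Ls = 1 * (Xv 1 5 * Xv 4 5) + (1 * (Xv 3 4 * Xv 4 5))"
    by (simp add: L_def bet.simps Cst_simps algebra_simps)
  also have "\<dots> \<in> I5" by (rule I_add[OF I_multL[OF B_15_45] I_multL[OF B_34_45]])
  finally show ?thesis .
qed

lemma F1_2_0: "L 2 * L 0 - Cst (bet 2 0) * Ls \<in> I5"
proof -
  have "L 2 * L 0 - Cst (bet 2 0) * Ls = 1 * (Xv 3 4 * Xv 2 5 - Ls) + (1 * (Xv 3 4 * Xv 3 4 + Ls))"
    by (simp add: L_def bet.simps Cst_simps algebra_simps)
  also have "\<dots> \<in> I5" by (rule I_add[OF I_multL[OF B_34_25] I_multL[OF B_34_34]])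
  finally show ?thesis .
qed

lemma F1_2_1: "L 2 * L 1 - Cst (bet 2 1) * Ls \<in> I5"
proof -
  have "L 2 * L 1 - Cst (bet 2 1) * Ls = 1 * (Xv 3 4 * Xv 1 5 - Ls) + (1 * (Xv 3 4 * Xv 3 4 + Ls))"
    by (simp add: L_def bet.simps Cst_simps algebra_simps)
  also have "\<dots> \<in> I5" by (rule I_add[OF I_multL[OF B_34_15] I_multL[OF B_34_34]])
  finally show ?thesis .
qed

lemma F1_2_2: "L 2 * L 2 - Cst (bet 2 2) * Ls \<in> I5"
proof -
  have "L 2 * L 2 - Cst (bet 2 2) * Ls = 1 * (Xv 3 4 * Xv 3 4 + Ls)"
    by (simp add: L_def bet.simps Cst_simps algebra_simps)
  also have "\<dots> \<in> I5" by (rule I_multL[OF B_34_34])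
  finally show ?thesis .
qed

lemma F1_2_3: "L 2 * L 3 - Cst (bet 2 3) * Ls \<in> I5"
proof -
  have "L 2 * L 3 - Cst (bet 2 3) * Ls = 1 * (Xv 3 4 * Xv 3 5)"
    by (simp add: L_def bet.simps Cst_simps algebra_simps)
  also have "\<dots> \<in> I5" by (rule I_multL[OF B_34_35])
  finally show ?thesis .
qed

lemma F1_2_4: "L 2 * L 4 - Cst (bet 2 4) * Ls \<in> I5"
proof -
  have "L 2 * L 4 - Cst (bet 2 4) * Ls = 1 * (Xv 3 4 * Xv 4 5)"
    by (simp add: L_def bet.simps Cst_simps algebra_simps)
  also have "\<dots> \<in> I5" by (rule I_multL[OF B_34_45])
  finally show ?thesis .
qed

lemma F1_3_0: "L 3 * L 0 - Cst (bet 3 0) * Ls \<in> I5"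
proof -
  have "L 3 * L 0 - Cst (bet 3 0) * Ls = 1 * (Xv 2 5 * Xv 3 5) + (1 * (Xv 3 4 * Xv 3 5))"
    by (simp add: L_def bet.simps Cst_simps algebra_simps)
  also have "\<dots> \<in> I5" by (rule I_add[OF I_multL[OF B_25_35] I_multL[OF B_34_35]])
  finally show ?thesis .
qed

lemma F1_3_1: "L 3 * L 1 - Cst (bet 3 1) * Ls \<in> I5"
proof -
  have "L 3 * L 1 - Cst (bet 3 1) * Ls = 1 * (Xv 1 5 * Xv 3 5) + (1 * (Xv 3 4 * Xv 3 5))"
    by (simp add: L_def bet.simps Cst_simps algebra_simps)
  also have "\<dots> \<in> I5" by (rule I_add[OF I_multL[OF B_15_35] I_multL[OF B_34_35]])
  finally show ?thesis .
qed

lemma F1_3_2: "L 3 * L 2 - Cst (bet 3 2) * Ls \<in> I5"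
proof -
  have "L 3 * L 2 - Cst (bet 3 2) * Ls = 1 * (Xv 3 4 * Xv 3 5)"
    by (simp add: L_def bet.simps Cst_simps algebra_simps)
  also have "\<dots> \<in> I5" by (rule I_multL[OF B_34_35])
  finally show ?thesis .
qed

lemma F1_3_3: "L 3 * L 3 - Cst (bet 3 3) * Ls \<in> I5"
proof -
  have "L 3 * L 3 - Cst (bet 3 3) * Ls = 1 * (Xv 3 5 * Xv 3 5 + Ls)"
    by (simp add: L_def bet.simps Cst_simps algebra_simps)
  also have "\<dots> \<in> I5" by (rule I_multL[OF B_35_35])
  finally show ?thesis .
qed

lemma F1_3_4: "L 3 * L 4 - Cst (bet 3 4) * Ls \<in> I5"
proof -
  have "L 3 * L 4 - Cst (bet 3 4) * Ls = 1 * (Xv 3 5 * Xv 4 5)"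
    by (simp add: L_def bet.simps Cst_simps algebra_simps)
  also have "\<dots> \<in> I5" by (rule I_multL[OF B_35_45])
  finally show ?thesis .
qed

lemma F1_4_0: "L 4 * L 0 - Cst (bet 4 0) * Ls \<in> I5"
proof -
  have "L 4 * L 0 - Cst (bet 4 0) * Ls = 1 * (Xv 2 5 * Xv 4 5) + (1 * (Xv 3 4 * Xv 4 5))"
    by (simp add: L_def bet.simps Cst_simps algebra_simps)
  also have "\<dots> \<in> I5" by (rule I_add[OF I_multL[OF B_25_45] I_multL[OF B_34_45]])
  finally show ?thesis .
qed

lemma F1_4_1: "L 4 * L 1 - Cst (bet 4 1) * Ls \<in> I5"
proof -
  have "L 4 * L 1 - Cst (bet 4 1) * Ls = 1 * (Xv 1 5 * Xv 4 5) + (1 * (Xv 3 4 * Xv 4 5))"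
    by (simp add: L_def bet.simps Cst_simps algebra_simps)
  also have "\<dots> \<in> I5" by (rule I_add[OF I_multL[OF B_15_45] I_multL[OF B_34_45]])
  finally show ?thesis .
qed

lemma F1_4_2: "L 4 * L 2 - Cst (bet 4 2) * Ls \<in> I5"
proof -
  have "L 4 * L 2 - Cst (bet 4 2) * Ls = 1 * (Xv 3 4 * Xv 4 5)"
    by (simp add: L_def bet.simps Cst_simps algebra_simps)
  also have "\<dots> \<in> I5" by (rule I_multL[OF B_34_45])
  finally show ?thesis .
qed

lemma F1_4_3: "L 4 * L 3 - Cst (bet 4 3) * Ls \<in> I5"
proof -
  have "L 4 * L 3 - Cst (bet 4 3) * Ls = 1 * (Xv 3 5 * Xv 4 5)"
    by (simp add: L_def bet.simps Cst_simps algebra_simps)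
  also have "\<dots> \<in> I5" by (rule I_multL[OF B_35_45])
  finally show ?thesis .
qed

lemma F1_4_4: "L 4 * L 4 - Cst (bet 4 4) * Ls \<in> I5"
proof -
  have "L 4 * L 4 - Cst (bet 4 4) * Ls = 1 * (Xv 4 5 * Xv 4 5 + Ls)"
    by (simp add: L_def bet.simps Cst_simps algebra_simps)
  also have "\<dots> \<in> I5" by (rule I_multL[OF B_45_45])
  finally show ?thesis .
qed

lemma F2_0: "L 0 * Ls \<in> I5"
proof -
  have "L 0 * Ls = 1 * (Xv 2 5 * Ls) + (1 * (Xv 3 4 * Ls))"
    by (simp add: L_def algebra_simps)
  also have "\<dots> \<in> I5" by (rule I_add[OF I_multL[OF D_25] I_multL[OF D_34]])
  finally show ?thesis .
qed

lemma F2_1: "L 1 * Ls \<in> I5"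
proof -
  have "L 1 * Ls = 1 * (Xv 1 5 * Ls) + (1 * (Xv 3 4 * Ls))"
    by (simp add: L_def algebra_simps)
  also have "\<dots> \<in> I5" by (rule I_add[OF I_multL[OF D_15] I_multL[OF D_34]])
  finally show ?thesis .
qed

lemma F2_2: "L 2 * Ls \<in> I5"
proof -
  have "L 2 * Ls = 1 * (Xv 3 4 * Ls)"
    by (simp add: L_def algebra_simps)
  also have "\<dots> \<in> I5" by (rule I_multL[OF D_34])
  finally show ?thesis .
qed

lemma F2_3: "L 3 * Ls \<in> I5"
proof -
  have "L 3 * Ls = 1 * (Xv 3 5 * Ls)"
    by (simp add: L_def algebra_simps)
  also have "\<dots> \<in> I5" by (rule I_multL[OF D_35])
  finally show ?thesis .
qed

lemma F2_4: "L 4 * Ls \<in> I5"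
proof -
  have "L 4 * Ls = 1 * (Xv 4 5 * Ls)"
    by (simp add: L_def algebra_simps)
  also have "\<dots> \<in> I5" by (rule I_multL[OF D_45])
  finally show ?thesis .
qed

lemma P_1_2: "Xv 1 2 - lift (phi 1 + phi 2 + cc) \<in> I5"
proof -
  have l: "lift (phi 1 + phi 2 + cc) = Xv 1 5 + Xv 2 5 + Xv 3 4 + - (Xv 3 5) + - (Xv 4 5)"
    by (simp add: lift_def Lv_def sum5 vc_def phi_def cc_def L_def Cst_simps algebra_simps)
  have "Xv 1 2 - (Xv 1 5 + Xv 2 5 + Xv 3 4 + - (Xv 3 5) + - (Xv 4 5)) = 1 * (Xv 1 2 + Xv 3 5 - Xv 1 3 - Xv 2 5) + (1 * (Xv 1 3 + Xv 4 5 - Xv 1 5 - Xv 3 4))"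
    by (simp add: algebra_simps)
  also have "\<dots> \<in> I5" by (rule I_add[OF I_multL[OF lr_1_2_3_5] I_multL[OF lr_1_3_5_4]])
  finally show ?thesis unfolding l .
qed

lemma P_1_3: "Xv 1 3 - lift (phi 1 + phi 3 + cc) \<in> I5"
proof -
  have l: "lift (phi 1 + phi 3 + cc) = Xv 1 5 + Xv 3 4 + - (Xv 4 5)"
    by (simp add: lift_def Lv_def sum5 vc_def phi_def cc_def L_def Cst_simps algebra_simps)
  have "Xv 1 3 - (Xv 1 5 + Xv 3 4 + - (Xv 4 5)) = 1 * (Xv 1 3 + Xv 4 5 - Xv 1 5 - Xv 3 4)"
    by (simp add: algebra_simps)
  also have "\<dots> \<in> I5" by (rule I_multL[OF lr_1_3_5_4])
  finally show ?thesis unfolding l .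
qed

lemma P_1_4: "Xv 1 4 - lift (phi 1 + phi 4 + cc) \<in> I5"
proof -
  have l: "lift (phi 1 + phi 4 + cc) = Xv 1 5 + Xv 3 4 + - (Xv 3 5)"
    by (simp add: lift_def Lv_def sum5 vc_def phi_def cc_def L_def Cst_simps algebra_simps)
  have "Xv 1 4 - (Xv 1 5 + Xv 3 4 + - (Xv 3 5)) = 1 * (Xv 1 4 + Xv 3 5 - Xv 1 5 - Xv 3 4)"
    by (simp add: algebra_simps)
  also have "\<dots> \<in> I5" by (rule I_multL[OF lr_1_4_5_3])
  finally show ?thesis unfolding l .
qed

lemma P_1_5: "Xv 1 5 - lift (phi 1 + phi 5 + cc) \<in> I5"
proof -
  have l: "lift (phi 1 + phi 5 + cc) = Xv 1 5"
    by (simp add: lift_def Lv_def sum5 vc_def phi_def cc_def L_def Cst_simps algebra_simps)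
  show ?thesis unfolding l by (simp add: I_zero)
qed

lemma P_2_3: "Xv 2 3 - lift (phi 2 + phi 3 + cc) \<in> I5"
proof -
  have l: "lift (phi 2 + phi 3 + cc) = Xv 2 5 + Xv 3 4 + - (Xv 4 5)"
    by (simp add: lift_def Lv_def sum5 vc_def phi_def cc_def L_def Cst_simps algebra_simps)
  have "Xv 2 3 - (Xv 2 5 + Xv 3 4 + - (Xv 4 5)) = 1 * (Xv 2 3 + Xv 4 5 - Xv 2 5 - Xv 3 4)"
    by (simp add: algebra_simps)
  also have "\<dots> \<in> I5" by (rule I_multL[OF lr_2_3_5_4])
  finally show ?thesis unfolding l .
qed

lemma lr_2_4_5_3: "Xv 2 4 + Xv 3 5 - Xv 2 5 - Xv 3 4 \<in> I5"
  using LRmem[of 2 4 5 3] by (simp add: Xv_sym)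

lemma P_2_4: "Xv 2 4 - lift (phi 2 + phi 4 + cc) \<in> I5"
proof -
  have l: "lift (phi 2 + phi 4 + cc) = Xv 2 5 + Xv 3 4 + - (Xv 3 5)"
    by (simp add: lift_def Lv_def sum5 vc_def phi_def cc_def L_def Cst_simps algebra_simps)
  have "Xv 2 4 - (Xv 2 5 + Xv 3 4 + - (Xv 3 5)) = 1 * (Xv 2 4 + Xv 3 5 - Xv 2 5 - Xv 3 4)"
    by (simp add: algebra_simps)
  also have "\<dots> \<in> I5" by (rule I_multL[OF lr_2_4_5_3])
  finally show ?thesis unfolding l .
qed

lemma P_2_5: "Xv 2 5 - lift (phi 2 + phi 5 + cc) \<in> I5"
proof -
  have l: "lift (phi 2 + phi 5 + cc) = Xv 2 5"
    by (simp add: lift_def Lv_def sum5 vc_def phi_def cc_def L_def Cst_simps algebra_simps)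
  show ?thesis unfolding l by (simp add: I_zero)
qed

lemma P_3_4: "Xv 3 4 - lift (phi 3 + phi 4 + cc) \<in> I5"
proof -
  have l: "lift (phi 3 + phi 4 + cc) = Xv 3 4"
    by (simp add: lift_def Lv_def sum5 vc_def phi_def cc_def L_def Cst_simps algebra_simps)
  show ?thesis unfolding l by (simp add: I_zero)
qed

lemma P_3_5: "Xv 3 5 - lift (phi 3 + phi 5 + cc) \<in> I5"
proof -
  have l: "lift (phi 3 + phi 5 + cc) = Xv 3 5"
    by (simp add: lift_def Lv_def sum5 vc_def phi_def cc_def L_def Cst_simps algebra_simps)
  show ?thesis unfolding l by (simp add: I_zero)
qed

lemma P_4_5: "Xv 4 5 - lift (phi 4 + phi 5 + cc) \<in> I5"
proof -
  have l: "lift (phi 4 + phi 5 + cc) = Xv 4 5"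
    by (simp add: lift_def Lv_def sum5 vc_def phi_def cc_def L_def Cst_simps algebra_simps)
  show ?thesis unfolding l by (simp add: I_zero)
qed




lemma F1gen: "x < 5 \<Longrightarrow> y < 5 \<Longrightarrow> L x * L y - Cst (bet x y) * Ls \<in> I5"
  apply (drule lt5)+
  apply (elim disjE)
  apply (simp_all only: F1_0_0 F1_0_1 F1_0_2 F1_0_3 F1_0_4 F1_1_0 F1_1_1 F1_1_2 F1_1_3 F1_1_4
     F1_2_0 F1_2_1 F1_2_2 F1_2_3 F1_2_4 F1_3_0 F1_3_1 F1_3_2 F1_3_3 F1_3_4
     F1_4_0 F1_4_1 F1_4_2 F1_4_3 F1_4_4)
  done

lemma F2gen: "x < 5 \<Longrightarrow> L x * Ls \<in> I5"
  apply (drule lt5)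
  apply (elim disjE)
  apply (simp_all only: F2_0 F2_1 F2_2 F2_3 F2_4)
  done

lemma F3: "Ls * Ls \<in> I5"
proof -
  have e: "Ls * Ls = Xv 1 5 * (Xv 3 4 * Ls)" by (simp add: Ls_def algebra_simps)
  show ?thesis unfolding e by (rule I_multL[OF D_34])
qed

lemma Bv_expand: "Bv a b = (\<Sum>x<5. \<Sum>y<5. bet x y * (vc x a * vc y b))"
  by (simp add: sum5 bet.simps vc_def Bv_def)

lemma D1: "Lv a * Lv b - Cst (Bv a b) * Ls \<in> I5"
proof -
  have "Lv a * Lv b - Cst (Bv a b) * Ls =
     (\<Sum>x<5. \<Sum>y<5. Cst (vc x a * vc y b) * (L x * L y - Cst (bet x y) * Ls))"
  proof -
    have "Lv a * Lv b = (\<Sum>x<5. \<Sum>y<5. Cst (vc x a) * L x * (Cst (vc y b) * L y))"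
      unfolding Lv_def by (rule sum_product)
    moreover have "Cst (Bv a b) * Ls = (\<Sum>x<5. \<Sum>y<5. Cst (bet x y * (vc x a * vc y b)) * Ls)"
      unfolding Bv_expand by (simp add: Cst_sum sum_distrib_right)
    ultimately show ?thesis
      by (simp add: sum_subtractf[symmetric] Cst_simps algebra_simps)
  qed
  also have "\<dots> \<in> I5"
    by (intro I_sum finite_lessThan I_multL F1gen) auto
  finally show ?thesis .
qed

lemma LvLs: "Lv a * Ls \<in> I5"
proof -
  have "Lv a * Ls = (\<Sum>x<5. Cst (vc x a) * (L x * Ls))"
    unfolding Lv_def by (simp add: sum_distrib_right mult.assoc)
  also have "\<dots> \<in> I5" by (intro I_sum finite_lessThan I_multL F2gen) auto
  finally show ?thesis .
qed

lemma LM: "lift a * lift b - lift (a * b) \<in> I5"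
proof -
  have "lift a * lift b - lift (a * b) = (Lv a * Lv b - Cst (Bv a b) * Ls) + Cst (a6 b) * (Lv a * Ls)
      + Cst (a6 a) * (Lv b * Ls) + Cst (a6 a * a6 b) * (Ls * Ls)"
    unfolding lift_def Lv_lin(4) by (simp add: Cst_simps algebra_simps)
  also have "\<dots> \<in> I5"
    by (intro I_add I_multL D1 LvLs F3)
  finally show ?thesis .
qed

lemma vc_one: "vc x (1::'k::comm_ring_1 A) = 0" by (simp add: vc_def)
lemma Lv_one: "Lv (1::'k::comm_ring_1 A) = 0" unfolding Lv_def by (simp add: vc_one Cst_simps)

lemma lift_simps: "lift (a + b) = lift a + lift b" "lift (of_k c * a) = Cst c * lift a" "lift 0 = 0"
  "lift (1::'k::comm_ring_1 A) = 1"
proof -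
  show "lift (a + b) = lift a + lift b" unfolding lift_def by (simp add: Lv_lin Cst_simps algebra_simps)
  show "lift (of_k c * a) = Cst c * lift a" unfolding lift_def Lv_lin(2) by (simp add: Cst_simps algebra_simps)
  show "lift 0 = 0" unfolding lift_def by (simp add: Lv_lin Cst_simps)
  show "lift (1::'k A) = 1" unfolding lift_def by (simp add: Lv_one Cst_simps)
qed

lemma lift_sum: "lift (sum f S) = (\<Sum>i\<in>S. lift (f i))"
  by (induction S rule: infinite_finite_induct) (simp_all add: lift_simps)

definition cg :: "'k::comm_ring_1 kpoly \<Rightarrow> 'k kpoly \<Rightarrow> bool" where "cg p q \<longleftrightarrow> p - q \<in> I5"

lemma cg_mult: "cg a a' \<Longrightarrow> cg b b' \<Longrightarrow> cg (a * b) (a' * b')"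
proof -
  assume "cg a a'" "cg b b'"
  then have "(a - a') * b + a' * (b - b') \<in> I5" unfolding cg_def by (intro I_add I_multR I_multL)
  moreover have "(a - a') * b + a' * (b - b') = a * b - a' * b'" by (simp add: algebra_simps)
  ultimately show ?thesis by (simp add: cg_def)
qed

lemma cg_lift_mult: "cg x (lift a) \<Longrightarrow> cg y (lift b) \<Longrightarrow> cg (x * y) (lift (a * b))"
proof -
  assume "cg x (lift a)" "cg y (lift b)"
  then have "cg (x * y) (lift a * lift b)" by (rule cg_mult)
  then have "x * y - lift a * lift b + (lift a * lift b - lift (a * b)) \<in> I5"
    unfolding cg_def by (intro I_add LM)
  then show ?thesis by (simp add: cg_def)
qed

lemma cg_pow: "cg x (lift a) \<Longrightarrow> cg (x ^ e) (lift (a ^ e))"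
  by (induction e) (auto simp: lift_simps cg_def I_zero intro: cg_lift_mult[unfolded cg_def])

lemma cg_prod: "finite K \<Longrightarrow> (\<And>S. S \<in> K \<Longrightarrow> cg (f S) (lift (g S))) \<Longrightarrow> cg (prod f K) (lift (prod g K))"
  by (induction K rule: finite_induct) (auto simp: lift_simps cg_def I_zero intro: cg_lift_mult[unfolded cg_def])

lemma Pgen_lt: "a \<in> {1..5} \<Longrightarrow> b \<in> {1..5} \<Longrightarrow> a < b \<Longrightarrow> Xv a b - lift (phi a + phi b + cc) \<in> I5"
  apply (drule in5)+
  apply (elim disjE)
  apply (simp_all only: P_1_2 P_1_3 P_1_4 P_1_5 P_2_3 P_2_4 P_2_5 P_3_4 P_3_5 P_4_5)
  done

lemma Pgen: "a \<in> {1..5} \<Longrightarrow> b \<in> {1..5} \<Longrightarrow> a \<noteq> b \<Longrightarrow> Xv a b - lift (phi a + phi b + cc) \<in> I5"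
proof -
  assume ab: "a \<in> {1..5}" "b \<in> {1..5}" "a \<noteq> b"
  show ?thesis
  proof (cases "a < b")
    case True then show ?thesis using Pgen_lt ab by blast
  next
    case False
    then have "b < a" using ab by simp
    then have h: "Xv b a - lift (phi b + phi a + cc) \<in> I5" using Pgen_lt ab by blast
    have e1: "Xv a b = Xv b a" by (rule Xv_sym)
    have e2: "phi a + phi b = phi b + phi a" by (rule add.commute)
    show ?thesis unfolding e1 e2 by (rule h)
  qed
qed

lemma LV: "cg (var S :: 'k::comm_ring_1 kpoly) (lift (val5 S))"
proof (cases "bdiv 5 S")
  case False
  have "var S \<in> {var S | S. \<not> bdiv 5 S}" using False by blast
  then have "var S \<in> I5" by (intro I_gen) (unfold keel_rels_def, blast)
  then show ?thesis using False by (simp add: cg_def val5_def lift_simps)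
next
  case True
  obtain a b where P: "pr S = {a, b}" "a \<noteq> b" using pr_props[OF True] pair_sub by blast
  have ab: "a \<in> {1..5}" "b \<in> {1..5}" using pr_props[OF True] P by auto
  have v: "(val5 S :: 'k A) = phi a + phi b + cc" using True P by (simp add: val5_def)
  have s1: "(var S :: 'k kpoly) - var (pr S) \<in> I5"
  proof (cases "card S = 2")
    case True then show ?thesis by (simp add: pr_def I_zero)
  next
    case False
    have "var S - var (cmpl 5 S) \<in> {var S - var (cmpl 5 S) | S. bdiv 5 S}" using \<open>bdiv 5 S\<close> by blast
    then have "var S - var (cmpl 5 S) \<in> I5"
      by (intro I_gen) (unfold keel_rels_def, rule UnI1[OF UnI1[OF UnI1[OF UnI2]]])
    then show ?thesis using False by (simp add: pr_def)
  qed
  have s2: "var (pr S) - lift (val5 S :: 'k A) \<in> I5" using Pgen[OF ab P(2)] P v by (simp add: Xv_def)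
  have "var S - var (pr S) + (var (pr S) - lift (val5 S :: 'k A)) \<in> I5" by (rule I_add[OF s1 s2])
  then show ?thesis by (simp add: cg_def)
qed

lemma single_sum1: "finite K \<Longrightarrow> Poly_Mapping.single (sum f K) (1::'k::comm_ring_1) = (\<Prod>S\<in>K. Poly_Mapping.single (f S) 1)"
proof (induction K rule: finite_induct)
  case empty then show ?case by simp
next
  case (insert x F)
  have "Poly_Mapping.single (f x) 1 * Poly_Mapping.single (sum f F) (1::'k) = Poly_Mapping.single (f x + sum f F) 1"
    by (simp add: mult_single)
  then show ?case using insert by simp
qed

lemma single_pow: "Poly_Mapping.single (Poly_Mapping.single S e) (1::'k::comm_ring_1) = var S ^ e"
proof (induction e)
  case 0 then show ?case by simp
next
  case (Suc e)
  have "var S ^ Suc e = var S * var S ^ e" by simp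
  also have "\<dots> = Poly_Mapping.single (Poly_Mapping.single S 1) 1 * Poly_Mapping.single (Poly_Mapping.single S e) (1::'k)"
    using Suc by (simp add: var_def)
  also have "\<dots> = Poly_Mapping.single (Poly_Mapping.single S 1 + Poly_Mapping.single S e) 1" by (simp add: mult_single)
  also have "Poly_Mapping.single S 1 + Poly_Mapping.single S e = Poly_Mapping.single S (Suc e)"
    by (simp add: single_add[symmetric])
  finally show ?case ..
qed

lemma mono_expand: "Poly_Mapping.single m (1::'k::comm_ring_1) = (\<Prod>S\<in>Poly_Mapping.keys m. var S ^ Poly_Mapping.lookup m S)"
proof -
  have "Poly_Mapping.single m (1::'k) = Poly_Mapping.single (\<Sum>S\<in>Poly_Mapping.keys m. Poly_Mapping.single S (Poly_Mapping.lookup m S)) 1"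
    by (subst pm_expand[of m]) simp
  also have "\<dots> = (\<Prod>S\<in>Poly_Mapping.keys m. var S ^ Poly_Mapping.lookup m S)"
    by (simp add: single_sum1 single_pow)
  finally show ?thesis .
qed

lemma cg_mono: "cg (Poly_Mapping.single m (1::'k::comm_ring_1)) (lift (mon val5 m))"
  unfolding mono_expand mon_def
  by (rule cg_prod) (auto intro: cg_pow LV)

lemma NF_poly: "p - lift (evl val5 p) \<in> (I5 :: 'k::comm_ring_1 kpoly set)"
proof -
  have e: "p = (\<Sum>m\<in>Poly_Mapping.keys p. Cst (Poly_Mapping.lookup p m) * Poly_Mapping.single m 1)"
    by (subst pm_expand[of p]) (simp add: Cst_def mult_single)
  have "lift (evl val5 p) = (\<Sum>m\<in>Poly_Mapping.keys p. Cst (Poly_Mapping.lookup p m) * lift (mon val5 m))"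
    by (simp add: evl_def lift_sum lift_simps)
  then have "p - lift (evl val5 p) = (\<Sum>m\<in>Poly_Mapping.keys p. Cst (Poly_Mapping.lookup p m) * (Poly_Mapping.single m 1 - lift (mon val5 m)))"
    by (subst e) (simp add: sum_subtractf[symmetric] algebra_simps)
  also have "\<dots> \<in> I5"
    by (intro I_sum finite_keys I_multL cg_mono[unfolded cg_def])
  finally show ?thesis .
qed

lemma I_iff: "x \<in> (I5 :: 'k::comm_ring_1 kpoly set) \<longleftrightarrow> evl val5 x = 0"
proof
  assume "x \<in> I5" then show "evl val5 x = 0" by (rule evl_I)
next
  assume "evl val5 x = 0"
  then show "x \<in> I5" using NF_poly[of x] by (simp add: lift_simps)
qed




lemma lf_add: "linear_form p \<Longrightarrow> linear_form q \<Longrightarrow> linear_form (p + q)"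
  unfolding linear_form_def using keys_add[of p q] by blast

lemma lf_zero: "linear_form 0" by (simp add: linear_form_def)

lemma lf_sum: "(\<And>i. i \<in> S \<Longrightarrow> linear_form (f i)) \<Longrightarrow> linear_form (sum f S)"
  by (induction S rule: infinite_finite_induct) (auto intro: lf_add lf_zero)

lemma lf_single: "linear_form (Poly_Mapping.single (Poly_Mapping.single S (Suc 0)) c)"
  by (simp add: linear_form_def mdeg_def)

lemma Cst_var: "Cst c * var S = Poly_Mapping.single (Poly_Mapping.single S 1) c"
  by (simp add: Cst_def var_def mult_single)

lemma lf_CstL: "linear_form (Cst c * L x)"
  unfolding L_def Xv_def by (auto simp: distrib_left Cst_var intro!: lf_add lf_single)

section \<open>the resolution\<close>

definition bb :: "nat \<Rightarrow> nat" where "bb i = card (NW i)"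

definition wd :: "nat \<Rightarrow> nat \<Rightarrow> nat list" where
  "wd i = (SOME f. bij_betw f {..<bb i} (NW i))"

lemma wd_bij: "bij_betw (wd i) {..<bb i} (NW i)"
proof -
  obtain h where "bij_betw h {0..<card (NW i)} (NW i)" using ex_bij_betw_nat_finite[OF finite_NW] by blast
  then have "\<exists>f. bij_betw f {..<bb i} (NW i)" by (auto simp: bb_def atLeast0LessThan)
  then show ?thesis unfolding wd_def by (rule someI_ex)
qed

lemma wd_in: "c < bb i \<Longrightarrow> wd i c \<in> NW i" using wd_bij bij_betwE by blast
lemma wd_inj: "c < bb i \<Longrightarrow> c' < bb i \<Longrightarrow> wd i c = wd i c' \<Longrightarrow> c = c'"
  using wd_bij unfolding bij_betw_def inj_on_def by blast
lemma wd_surj: assumes w: "w \<in> NW i" shows "\<exists>c<bb i. wd i c = w"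
proof -
  have "w \<in> wd i ` {..<bb i}" using wd_bij[of i] w by (simp add: bij_betw_def)
  then show ?thesis by auto
qed

lemma sum_wd: "(\<Sum>c<bb i. g (wd i c)) = (\<Sum>w\<in>NW i. g w)"
  using sum.reindex_bij_betw[OF wd_bij, of g] .

definition MM :: "nat \<Rightarrow> nat \<Rightarrow> nat \<Rightarrow> 'k::comm_ring_1 kpoly" where
  "MM i r c = (\<Sum>x<5. Cst (NF (x # wd i r) (wd (Suc i) c)) * L x)"

definition Phi :: "nat \<Rightarrow> (nat \<Rightarrow> 'k::comm_ring_1 kpoly) \<Rightarrow> nat list \<Rightarrow> 'k A" where
  "Phi n u z = (\<Sum>c<bb n. of_k (NF z (wd n c)) * evl val5 (u c))"

lemma Phi_inC: "inC (Phi n u)"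
  unfolding Phi_def[abs_def] by (rule inC_sum) (auto intro: inC_NF)

lemma Phi_wd: assumes c0: "c0 < bb n" shows "Phi n u (wd n c0) = evl val5 (u c0)"
proof -
  have nw: "NF (wd n c0) = dl (wd n c0)" using NF_nrm[OF wd_in[OF c0]] .
  have "Phi n u (wd n c0) = (\<Sum>c<bb n. if c = c0 then evl val5 (u c) else 0)"
    unfolding Phi_def nw
    by (rule sum.cong) (auto simp: dl_def wd_inj[OF _ c0])
  then show ?thesis using c0 by simp
qed

lemma Phi_lift: assumes S: "inC S" and z: "z \<in> Wd n"
  shows "Phi n (\<lambda>c. lift (S (wd n c))) z = S z"
proof -
  have zs: "set z \<subseteq> {..<5}" and lz: "length z = n" using z by (auto simp: Wd_def)
  have "Phi n (\<lambda>c. lift (S (wd n c))) z = (\<Sum>c<bb n. of_k (NF z (wd n c)) * S (wd n c))"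
    unfolding Phi_def by (simp add: evl_lift)
  also have "\<dots> = (\<Sum>w\<in>NW n. of_k (NF z w) * S w)" by (rule sum_wd)
  also have "\<dots> = S z" using clB[OF S zs] lz by simp
  finally show ?thesis .
qed

lemma KC: "evl val5 (mat_app (bb (Suc i)) (MM i) u r) = D (Phi (Suc i) u) (wd i r)"
proof -
  have e1: "evl val5 (MM i r c) = (\<Sum>x<5. of_k (NF (x # wd i r) (wd (Suc i) c)) * ev x)" for c
    unfolding MM_def by (simp add: evl_sum evl_mult evl_L del: NF.simps)
  have "evl val5 (mat_app (bb (Suc i)) (MM i) u r) =
      (\<Sum>c<bb (Suc i). (\<Sum>x<5. of_k (NF (x # wd i r) (wd (Suc i) c)) * ev x) * evl val5 (u c))"
    unfolding mat_app_def by (simp add: evl_sum evl_mult e1 del: NF.simps)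
  also have "\<dots> = (\<Sum>c<bb (Suc i). \<Sum>x<5. ev x * (of_k (NF (x # wd i r) (wd (Suc i) c)) * evl val5 (u c)))"
    by (rule sum.cong[OF refl]) (simp add: sum_distrib_right sum_distrib_left ac_simps del: NF.simps)
  also have "\<dots> = (\<Sum>x<5. \<Sum>c<bb (Suc i). ev x * (of_k (NF (x # wd i r) (wd (Suc i) c)) * evl val5 (u c)))"
    by (rule sum.swap)
  also have "\<dots> = D (Phi (Suc i) u) (wd i r)"
    unfolding D_def Phi_def by (simp add: sum_distrib_left del: NF.simps)
  finally show ?thesis .
qed

lemma inC_D: "inC T \<Longrightarrow> inC (D T)"
  unfolding inC_def D_def
proof (intro allI impI)
  fix p q :: "nat list" assume T: "\<forall>p q. set p \<subseteq> {..<5} \<longrightarrow> set q \<subseteq> {..<5} \<longrightarrow>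
      (\<Sum>x<5. \<Sum>y<5. of_k (bet x y) * T (p @ x # y # q)) = 0"
    and p: "set p \<subseteq> {..<5}" and q: "set q \<subseteq> {..<5}"
  have "(\<Sum>x<5. \<Sum>y<5. of_k (bet x y) * (\<Sum>a<5. ev a * T (a # p @ x # y # q))) =
      (\<Sum>x<5. \<Sum>y<5. \<Sum>a<5. ev a * (of_k (bet x y) * T ((a # p) @ x # y # q)))"
    by (simp add: sum_distrib_left ac_simps)
  also have "\<dots> = (\<Sum>x<5. \<Sum>a<5. \<Sum>y<5. ev a * (of_k (bet x y) * T ((a # p) @ x # y # q)))"
    by (rule sum.cong[OF refl], rule sum.swap)
  also have "\<dots> = (\<Sum>a<5. \<Sum>x<5. \<Sum>y<5. ev a * (of_k (bet x y) * T ((a # p) @ x # y # q)))"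
    by (rule sum.swap)
  also have "\<dots> = (\<Sum>a<5. ev a * (\<Sum>x<5. \<Sum>y<5. of_k (bet x y) * T ((a # p) @ x # y # q)))"
    by (simp add: sum_distrib_left)
  also have "\<dots> = 0"
  proof (rule sum.neutral, rule ballI)
    fix a assume "a \<in> {..<(5::nat)}"
    then have "set (a # p) \<subseteq> {..<5}" using p by simp
    then show "ev a * (\<Sum>x<5. \<Sum>y<5. of_k (bet x y) * T ((a # p) @ x # y # q)) = 0"
      using T[rule_format, of "a # p" q] q by simp
  qed
  finally show "(\<Sum>x<5. \<Sum>y<5. of_k (bet x y) * (\<Sum>a<5. ev a * T (a # p @ x # y # q))) = 0" .
qed

lemma ev_mult: "x < 5 \<Longrightarrow> y < 5 \<Longrightarrow> ev x * ev y = of_k (bet x y) * (sA :: 'k::comm_ring_1 A)"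
  by (drule lt5)+ (elim disjE; simp add: ev_def sA_def bet.simps Bv_def times_A_def of_k_def)

lemma DD: assumes T: "inC T" and z: "set z \<subseteq> {..<5}" shows "D (D T) z = 0"
proof -
  have "D (D T) z = (\<Sum>x<5. \<Sum>y<5. (ev x * ev y) * T (y # x # z))"
    unfolding D_def by (simp add: sum_distrib_left ac_simps)
  also have "\<dots> = (\<Sum>x<5. \<Sum>y<5. sA * (of_k (bet y x) * T (y # x # z)))"
    by (intro sum.cong refl) (simp add: ev_mult bet_sym ac_simps)
  also have "\<dots> = (\<Sum>y<5. \<Sum>x<5. sA * (of_k (bet y x) * T (y # x # z)))"
    by (rule sum.swap)
  also have "\<dots> = sA * (\<Sum>y<5. \<Sum>x<5. of_k (bet y x) * T ([] @ y # x # z))"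
    by (simp add: sum_distrib_left)
  also have "\<dots> = 0" using T[unfolded inC_def, rule_format, of "[]" z] z by simp
  finally show ?thesis .
qed

lemma D_cong: "(\<And>x. x < 5 \<Longrightarrow> S (x # z) = T (x # z)) \<Longrightarrow> D S z = D T z"
  unfolding D_def by (rule sum.cong) auto

lemma Wd_Cons: "z \<in> Wd n \<Longrightarrow> x < 5 \<Longrightarrow> x # z \<in> Wd (Suc n)" by (simp add: Wd_def)

lemma a0_prod: "a0 (prod f K) = (\<Prod>i\<in>K. a0 (f i))"
  by (induction K rule: infinite_finite_induct) simp_all

lemma a0_pow: "a0 (x ^ e) = a0 x ^ e" by (induction e) simp_all

lemma a0_val5: "a0 (val5 S) = 0" by (simp add: val5_def)

lemma a0_mon: "a0 (mon val5 m) = (if m = 0 then 1 else (0::'k::comm_ring_1))"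
proof (cases "m = 0")
  case True then show ?thesis by simp
next
  case False
  then obtain S where S: "S \<in> Poly_Mapping.keys m" by (metis keys_eq_empty all_not_in_conv)
  have "a0 (mon val5 m :: 'k A) = (\<Prod>T\<in>Poly_Mapping.keys m. a0 (val5 T :: 'k A) ^ Poly_Mapping.lookup m T)"
    by (simp add: mon_def a0_prod a0_pow)
  also have "\<dots> = 0"
  proof (rule prod_zero[OF finite_keys])
    have "Poly_Mapping.lookup m S \<noteq> 0" using S by (simp add: in_keys_iff)
    then have "a0 (val5 S :: 'k A) ^ Poly_Mapping.lookup m S = 0" by (simp add: a0_val5 zero_power)
    then show "\<exists>T\<in>Poly_Mapping.keys m. a0 (val5 T :: 'k A) ^ Poly_Mapping.lookup m T = 0" using S by blast
  qed
  finally show ?thesis using False by simp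
qed

lemma a0_evl: "a0 (evl val5 g) = Poly_Mapping.lookup g (0 :: nat set \<Rightarrow>\<^sub>0 nat)"
proof -
  have "a0 (evl val5 g) = (\<Sum>m\<in>Poly_Mapping.keys g. Poly_Mapping.lookup g m * (if m = 0 then 1 else 0))"
    by (simp add: evl_def a0_mon)
  also have "\<dots> = Poly_Mapping.lookup g 0"
    by (simp add: sum.delta' in_keys_iff if_distrib[of "\<lambda>v. _ * v"] cong: if_cong)
  finally show ?thesis .
qed

theorem koszul_keel: "koszul (keel_ideal 5 :: 'k::field kpoly set)"
  unfolding koszul_def
proof (intro exI)
  show "linear_resolution_of_k (keel_ideal 5 :: 'k kpoly set) bb MM"
    unfolding linear_resolution_of_k_def
  proof (intro conjI allI impI)
    show "bb 0 = 1" by (simp add: bb_def NW_0)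
  next
    fix i r c assume "r < bb i \<and> c < bb (Suc i)"
    show "linear_form (MM i r c :: 'k kpoly)" unfolding MM_def by (rule lf_sum) (rule lf_CstL)
  next
    fix f :: "'k kpoly"
    have b0: "0 < bb 0" by (simp add: bb_def NW_0)
    have w00: "wd 0 0 = []" using wd_in[OF b0] by (simp add: NW_0)
    show "(\<exists>w. f - mat_app (bb 1) (MM 0) w 0 \<in> keel_ideal 5) \<longleftrightarrow>
          (\<exists>g. f - g \<in> keel_ideal 5 \<and> Poly_Mapping.lookup g 0 = 0)"
    proof
      assume "\<exists>w. f - mat_app (bb 1) (MM 0) w 0 \<in> keel_ideal 5"
      then obtain w where w: "f - mat_app (bb 1) (MM 0) w 0 \<in> keel_ideal 5" by blast
      have "Poly_Mapping.lookup (mat_app (bb 1) (MM 0) w 0 :: 'k kpoly) 0 = 0"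
        using KC[of 0 w 0] by (simp add: a0_evl[symmetric] D_a0)
      then show "\<exists>g. f - g \<in> keel_ideal 5 \<and> Poly_Mapping.lookup g 0 = 0" using w by blast
    next
      assume "\<exists>g. f - g \<in> keel_ideal 5 \<and> Poly_Mapping.lookup g 0 = 0"
      then obtain g where g: "f - g \<in> keel_ideal 5" "Poly_Mapping.lookup g 0 = 0" by blast
      define a where "a = evl val5 f"
      have a0a: "a0 a = 0" using g I_iff[of "f - g"] a0_evl[of g] by (simp add: a_def evl_diff)
      define W :: "nat list \<Rightarrow> 'k A" where
        "W z = (case z of [x] \<Rightarrow> of_k (vc x a) + (if x = 0 then of_k (a6 a) * ev 1 else 0) | _ \<Rightarrow> 0)" for z
      define w where "w c = lift (W (wd 1 c))" for c
      have "evl val5 (mat_app (bb 1) (MM 0) w 0) = D (Phi 1 w) []" using KC[of 0 w 0] w00 by simp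
      also have "\<dots> = (\<Sum>x<5. ev x * W [x])"
        unfolding D_def
      proof (rule sum.cong[OF refl])
        fix x :: nat assume x: "x \<in> {..<5}"
        then have "[x] \<in> NW 1" by (simp add: NW_def)
        then obtain c0 where c0: "c0 < bb 1" "wd 1 c0 = [x]" using wd_surj by blast
        have "Phi 1 w [x] = evl val5 (w c0)" using Phi_wd[OF c0(1)] c0(2) by simp
        also have "\<dots> = W [x]" unfolding w_def c0(2) by (rule evl_lift)
        finally show "ev x * Phi 1 w [x] = ev x * W [x]" by simp
      qed
      also have "\<dots> = a"
      proof -
        have "(\<Sum>x<5. ev x * W [x]) = (\<Sum>x<5. of_k (vc x a) * ev x) + of_k (a6 a) * (ev 0 * ev 1)"
          by (simp add: W_def sum5 algebra_simps)
        also have "\<dots> = a" using A_decomp[of a] a0a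
          by (simp add: ev_mult bet.simps)
        finally show ?thesis .
      qed
      finally have "evl val5 (f - mat_app (bb 1) (MM 0) w 0) = 0" by (simp add: evl_diff a_def)
      then have "f - mat_app (bb 1) (MM 0) w 0 \<in> keel_ideal 5" by (rule I_iff[THEN iffD2])
      then show "\<exists>w. f - mat_app (bb 1) (MM 0) w 0 \<in> keel_ideal 5" by blast
    qed
  next
    fix i and u :: "nat \<Rightarrow> 'k kpoly"
    assume ker: "\<forall>r<bb i. mat_app (bb (Suc i)) (MM i) u r \<in> keel_ideal 5"
    let ?U = "Phi (Suc i) u"
    have U: "inC ?U" by (rule Phi_inC)
    have DUn: "D ?U w = 0" if w: "w \<in> NW i" for w
    proof -
      obtain r where r: "r < bb i" "wd i r = w" using wd_surj[OF w] by blast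
      have "mat_app (bb (Suc i)) (MM i) u r \<in> keel_ideal 5" using ker r by blast
      then have "evl val5 (mat_app (bb (Suc i)) (MM i) u r) = 0" by (rule evl_I)
      then show ?thesis using KC[of i u r] r by simp
    qed
    have DU: "D ?U z = 0" if z: "z \<in> Wd i" for z
    proof -
      have zs: "set z \<subseteq> {..<5}" and lz: "length z = i" using z by (auto simp: Wd_def)
      have "D ?U z = (\<Sum>w\<in>NW i. of_k (NF z w) * D ?U w)" using clB[OF inC_D[OF U] zs] lz by simp
      also have "\<dots> = 0" by (simp add: DUn)
      finally show ?thesis .
    qed
    obtain S where S: "inC S" "\<forall>z\<in>Wd (Suc i). D S z = ?U z" using exactA[OF U DU] by blast
    define w where "w c = lift (S (wd (Suc (Suc i)) c))" for c
    show "\<exists>w. \<forall>j<bb (Suc i). u j - mat_app (bb (Suc (Suc i))) (MM (Suc i)) w j \<in> keel_ideal 5"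
    proof (intro exI allI impI)
      fix j assume j: "j < bb (Suc i)"
      have wj: "wd (Suc i) j \<in> Wd (Suc i)" using wd_in[OF j] NW_sub by blast
      have "evl val5 (mat_app (bb (Suc (Suc i))) (MM (Suc i)) w j) = D (Phi (Suc (Suc i)) w) (wd (Suc i) j)"
        by (rule KC)
      also have "\<dots> = D S (wd (Suc i) j)"
      proof (rule D_cong)
        fix x :: nat assume x: "x < 5"
        then have "x # wd (Suc i) j \<in> Wd (Suc (Suc i))" by (rule Wd_Cons[OF wj])
        then show "Phi (Suc (Suc i)) w (x # wd (Suc i) j) = S (x # wd (Suc i) j)"
          unfolding w_def by (rule Phi_lift[OF S(1)])
      qed
      also have "\<dots> = ?U (wd (Suc i) j)" using S(2) wj by blast
      also have "\<dots> = evl val5 (u j)" by (rule Phi_wd[OF j])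
      finally have e: "evl val5 (mat_app (bb (Suc (Suc i))) (MM (Suc i)) w j) = evl val5 (u j)" .
      show "u j - mat_app (bb (Suc (Suc i))) (MM (Suc i)) w j \<in> keel_ideal 5"
        by (rule I_iff[THEN iffD2]) (simp add: evl_diff e)
    qed
  next
    fix i and w :: "nat \<Rightarrow> 'k kpoly" and r assume r: "r < bb i"
    let ?v = "mat_app (bb (Suc (Suc i))) (MM (Suc i)) w"
    let ?Y = "D (Phi (Suc (Suc i)) w)"
    have Y: "inC ?Y" by (rule inC_D[OF Phi_inC])
    have pv: "Phi (Suc i) ?v z = ?Y z" if z: "z \<in> Wd (Suc i)" for z
    proof -
      have zs: "set z \<subseteq> {..<5}" and lz: "length z = Suc i" using z by (auto simp: Wd_def)
      have "Phi (Suc i) ?v z = (\<Sum>c<bb (Suc i). of_k (NF z (wd (Suc i) c)) * evl val5 (?v c))"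
        by (simp only: Phi_def)
      also have "\<dots> = (\<Sum>c<bb (Suc i). of_k (NF z (wd (Suc i) c)) * ?Y (wd (Suc i) c))"
        by (simp only: KC)
      also have "\<dots> = (\<Sum>w'\<in>NW (Suc i). of_k (NF z w') * ?Y w')" by (rule sum_wd)
      also have "\<dots> = ?Y z" using clB[OF Y zs] lz by simp
      finally show ?thesis .
    qed
    have wr: "wd i r \<in> Wd i" using wd_in[OF r] NW_sub by blast
    have "evl val5 (mat_app (bb (Suc i)) (MM i) ?v r) = D (Phi (Suc i) ?v) (wd i r)" by (rule KC)
    also have "\<dots> = D ?Y (wd i r)" by (rule D_cong) (simp add: pv Wd_Cons[OF wr])
    also have "\<dots> = 0" by (rule DD[OF Phi_inC]) (use wr in \<open>simp add: Wd_def\<close>)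
    finally show "mat_app (bb (Suc i)) (MM i) ?v r \<in> keel_ideal 5" by (rule I_iff[THEN iffD2])
  qed
qed


theorem mainTheorem1:
  shows "koszul (keel_ideal 5 :: 'k::field kpoly set)"
  by (rule koszul_keel)

end
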